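(* Let $(H,e)$ be a unital Hilbert space, $X=S(\mathfrak c_e)=\{\overline{\eta_0+e}:\eta_0\in H^e_h,\|\eta_0\|\le1\}\subseteq\overline H$ equipped with the weak$^*$ topology (a compact Hausdorff space), and let $\mu$ be a unital measure on $X$. Let $\iota:H\to L^2(X,\mu)$ be $\iota(\zeta)(t)=\langle\zeta,t\rangle$, and let $P$ be the orthogonal projection of $L^2(X,\mu)$ onto the closure of $\iota(H)$. Then $\iota$ is a Hilbert–Schmidt operator with $\|\iota\|_2\le\sqrt2$, $\iota(e)=1$, $\iota(\zeta^* )=\overline{\iota(\zeta)}$, $\iota(\{\zeta_0\in H^e_h:\|\zeta_0\|\le1\})\subseteq\{\eta\in L^2(X,\mu)_h: \eta\perp1,\|\eta\|_2\le1\}$, and $\iota(\mathfrak c_e)\subseteq L^2(X,\mu)_+$; $P$ is a unital positive projection; and the Hilbert space adjoint $\iota^*:L^2(X,\mu)\to H$ is a unital positive map, i.e. $\iota^*(1)=e$ and $\iota^*(L^2(X,\mu)_+)\subseteq\mathfrak c_e$.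
   Context: A Hilbert $*$-space is a complex Hilbert space (inner product linear in the first variable) with a conjugate-linear $\zeta\mapsto\zeta^*$, $\zeta^{**}=\zeta$, $(\zeta^*,\eta^* )=\overline{(\zeta,\eta)}$. A unital Hilbert space $(H,e)$ has a fixed hermitian unit vector $e$; $H^e=\{e\}^\perp$, $H^e_h$ its hermitian part; cone $\mathfrak c_e=\{\zeta\in H_h:\|\zeta\|\le\sqrt2(\zeta,e)\}$. $\overline H$ is the conjugate Hilbert space, paired with $H$ by $\langle\zeta,\bar\eta\rangle=(\zeta,\eta)$; $X$ is the set of states of $\mathfrak c_e$ (linear functionals $\sigma$ with $\sigma(e)=1$, $\sigma(\mathfrak c_e)\ge0$), all of which have the displayed form. A unital measure on $X$ is a probability Radon measure $\mu$ on $X$ with $\int_X\langle\zeta,t\rangle\,d\mu(t)=(\zeta,e)$ for all $\zeta\in H$. $L^2(X,\mu)$ is a unital Hilbert space with involution complex conjugation and unit $1$, with cone $L^2(X,\mu)_+=\{\eta\text{ real}:\|\eta-\int\eta\,d\mu\|_2\le\int\eta\,d\mu\}$. A linear map between unital Hilbert spaces is unital positive if it maps unit to unit and cone into cone. *)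

theory Defs
  imports "HOL-Analysis.Analysis" "HOL-Probability.Probability"
begin

definition hnorm :: "('h \<Rightarrow> 'h \<Rightarrow> complex) \<Rightarrow> 'h \<Rightarrow> real" where
  "hnorm ip x = sqrt (Re (ip x x))"

definition complex_hilbert_space ::
  "(complex \<Rightarrow> 'h::ab_group_add \<Rightarrow> 'h) \<Rightarrow> ('h \<Rightarrow> 'h \<Rightarrow> complex) \<Rightarrow> bool" where
  "complex_hilbert_space sc ip \<longleftrightarrow>
     (\<forall>x. sc 1 x = x) \<and>
     (\<forall>a b x. sc a (sc b x) = sc (a * b) x) \<and>
     (\<forall>a x y. sc a (x + y) = sc a x + sc a y) \<and>
     (\<forall>a b x. sc (a + b) x = sc a x + sc b x) \<and>
     (\<forall>x y z. ip (x + y) z = ip x z + ip y z) \<and>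
     (\<forall>a x y. ip (sc a x) y = a * ip x y) \<and>
     (\<forall>x y. ip y x = cnj (ip x y)) \<and>
     (\<forall>x. Im (ip x x) = 0 \<and> 0 \<le> Re (ip x x)) \<and>
     (\<forall>x. ip x x = 0 \<longrightarrow> x = 0) \<and>
     (\<forall>s::nat \<Rightarrow> 'h. (\<forall>\<epsilon>>0. \<exists>N. \<forall>m\<ge>N. \<forall>n\<ge>N. hnorm ip (s m - s n) < \<epsilon>) \<longrightarrow>
        (\<exists>l. (\<lambda>n. hnorm ip (s n - l)) \<longlonglongrightarrow> 0))"

definition hilbert_star_space ::
  "(complex \<Rightarrow> 'h::ab_group_add \<Rightarrow> 'h) \<Rightarrow> ('h \<Rightarrow> 'h \<Rightarrow> complex) \<Rightarrow> ('h \<Rightarrow> 'h) \<Rightarrow> bool" where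
  "hilbert_star_space sc ip star \<longleftrightarrow>
     complex_hilbert_space sc ip \<and>
     (\<forall>x y. star (x + y) = star x + star y) \<and>
     (\<forall>a x. star (sc a x) = sc (cnj a) (star x)) \<and>
     (\<forall>x. star (star x) = x) \<and>
     (\<forall>x y. ip (star x) (star y) = cnj (ip x y))"

definition unital_hilbert_space ::
  "(complex \<Rightarrow> 'h::ab_group_add \<Rightarrow> 'h) \<Rightarrow> ('h \<Rightarrow> 'h \<Rightarrow> complex) \<Rightarrow> ('h \<Rightarrow> 'h) \<Rightarrow> 'h \<Rightarrow> bool" where
  "unital_hilbert_space sc ip star e \<longleftrightarrow>
     hilbert_star_space sc ip star \<and> star e = e \<and> hnorm ip e = 1"

definition herm_perp :: "('h \<Rightarrow> 'h \<Rightarrow> complex) \<Rightarrow> ('h \<Rightarrow> 'h) \<Rightarrow> 'h \<Rightarrow> 'h set" where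
  "herm_perp ip star e = {x. ip x e = 0 \<and> star x = x}"

definition cone_e :: "('h \<Rightarrow> 'h \<Rightarrow> complex) \<Rightarrow> ('h \<Rightarrow> 'h) \<Rightarrow> 'h \<Rightarrow> 'h set" where
  "cone_e ip star e = {z. star z = z \<and> hnorm ip z \<le> sqrt 2 * Re (ip z e)}"

text \<open>A state is the conjugate vector of an element
eta0 + e with eta0 in the unit ball of the hermitian part of e-perp; we represent the
point of the conjugate space by the vector eta0 + e itself, so that the pairing is
ip zeta t.\<close>

definition state_space :: "('h::ab_group_add \<Rightarrow> 'h \<Rightarrow> complex) \<Rightarrow> ('h \<Rightarrow> 'h) \<Rightarrow> 'h \<Rightarrow> 'h set" where
  "state_space ip star e = {\<eta>0 + e | \<eta>0. \<eta>0 \<in> herm_perp ip star e \<and> hnorm ip \<eta>0 \<le> 1}"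

definition weak_star_top :: "('h::ab_group_add \<Rightarrow> 'h \<Rightarrow> complex) \<Rightarrow> ('h \<Rightarrow> 'h) \<Rightarrow> 'h \<Rightarrow> 'h topology" where
  "weak_star_top ip star e =
     topology_generated_by {{t \<in> state_space ip star e. ip \<zeta> t \<in> U} | \<zeta> U. open U}"

definition unital_measure ::
  "('h::ab_group_add \<Rightarrow> 'h \<Rightarrow> complex) \<Rightarrow> ('h \<Rightarrow> 'h) \<Rightarrow> 'h \<Rightarrow> 'h measure \<Rightarrow> bool" where
  "unital_measure ip star e \<mu> \<longleftrightarrow>
     prob_space \<mu> \<and>
     space \<mu> = state_space ip star e \<and>
     sets \<mu> = sigma_sets (state_space ip star e) {U. openin (weak_star_top ip star e) U} \<and>
     (\<forall>A \<in> sets \<mu>. emeasure \<mu> A =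
        (SUP K \<in> {K. compactin (weak_star_top ip star e) K \<and> K \<subseteq> A}. emeasure \<mu> K)) \<and>
     (\<forall>\<zeta>. integrable \<mu> (\<lambda>t. ip \<zeta> t) \<and> (\<integral>t. ip \<zeta> t \<partial>\<mu>) = ip \<zeta> e)"

section \<open>L^2(X,mu) (complex-valued), elements considered up to a.e. equality\<close>

definition L2 :: "'a measure \<Rightarrow> ('a \<Rightarrow> complex) set" where
  "L2 \<mu> = {f. f \<in> borel_measurable \<mu> \<and> integrable \<mu> (\<lambda>t. (cmod (f t))\<^sup>2)}"

definition L2inner :: "'a measure \<Rightarrow> ('a \<Rightarrow> complex) \<Rightarrow> ('a \<Rightarrow> complex) \<Rightarrow> complex" where
  "L2inner \<mu> f g = (\<integral>t. f t * cnj (g t) \<partial>\<mu>)"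

definition L2norm :: "'a measure \<Rightarrow> ('a \<Rightarrow> complex) \<Rightarrow> real" where
  "L2norm \<mu> f = sqrt (\<integral>t. (cmod (f t))\<^sup>2 \<partial>\<mu>)"

text \<open>Cone L^2_+ = {eta real : ||eta - int eta||_2 <= int eta}; for real eta the integral is real.\<close>

definition L2pos :: "'a measure \<Rightarrow> ('a \<Rightarrow> complex) set" where
  "L2pos \<mu> = {\<eta> \<in> L2 \<mu>. (AE t in \<mu>. Im (\<eta> t) = 0) \<and>
       L2norm \<mu> (\<lambda>t. \<eta> t - (\<integral>s. \<eta> s \<partial>\<mu>)) \<le> Re (\<integral>s. \<eta> s \<partial>\<mu>)}"

definition iota :: "('h \<Rightarrow> 'h \<Rightarrow> complex) \<Rightarrow> 'h \<Rightarrow> 'h \<Rightarrow> complex" where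
  "iota ip \<zeta> = (\<lambda>t. ip \<zeta> t)"

definition orthonormal_basis :: "('h::ab_group_add \<Rightarrow> 'h \<Rightarrow> complex) \<Rightarrow> 'h set \<Rightarrow> bool" where
  "orthonormal_basis ip B \<longleftrightarrow>
     (\<forall>b\<in>B. \<forall>c\<in>B. ip b c = (if b = c then 1 else 0)) \<and>
     (\<forall>x. (\<forall>b\<in>B. ip x b = 0) \<longrightarrow> x = 0)"

text \<open>Hilbert--Schmidt with Hilbert--Schmidt norm at most c:
for an orthonormal basis B the sum of ||T b||^2 converges and is at most c^2
(this is independent of the basis).\<close>

definition hilbert_schmidt_le ::
  "('h::ab_group_add \<Rightarrow> 'h \<Rightarrow> complex) \<Rightarrow> 'a measure \<Rightarrow> ('h \<Rightarrow> 'a \<Rightarrow> complex) \<Rightarrow> real \<Rightarrow> bool" where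
  "hilbert_schmidt_le ip \<mu> T c \<longleftrightarrow>
     (\<forall>B. orthonormal_basis ip B \<longrightarrow>
        (\<lambda>b. (L2norm \<mu> (T b))\<^sup>2) summable_on B \<and> (\<Sum>\<^sub>\<infinity>b\<in>B. (L2norm \<mu> (T b))\<^sup>2) \<le> c\<^sup>2)"

definition iota_range_closure ::
  "('h \<Rightarrow> 'h \<Rightarrow> complex) \<Rightarrow> 'h measure \<Rightarrow> ('h \<Rightarrow> complex) set" where
  "iota_range_closure ip \<mu> =
     {g \<in> L2 \<mu>. \<forall>\<epsilon>>0. \<exists>\<zeta>. L2norm \<mu> (\<lambda>t. g t - iota ip \<zeta> t) < \<epsilon>}"

text \<open>g is (a representative of) P f, the orthogonal projection of f onto the closure
of iota(H): g lies in that closure and f - g is orthogonal to iota(H)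
(equivalently to its closure).\<close>

definition is_P_image ::
  "('h \<Rightarrow> 'h \<Rightarrow> complex) \<Rightarrow> 'h measure \<Rightarrow> ('h \<Rightarrow> complex) \<Rightarrow> ('h \<Rightarrow> complex) \<Rightarrow> bool" where
  "is_P_image ip \<mu> f g \<longleftrightarrow>
     g \<in> iota_range_closure ip \<mu> \<and> (\<forall>\<zeta>. L2inner \<mu> (\<lambda>t. f t - g t) (iota ip \<zeta>) = 0)"

definition is_iota_adj ::
  "('h \<Rightarrow> 'h \<Rightarrow> complex) \<Rightarrow> 'h measure \<Rightarrow> ('h \<Rightarrow> complex) \<Rightarrow> 'h \<Rightarrow> bool" where
  "is_iota_adj ip \<mu> g \<zeta> \<longleftrightarrow> (\<forall>\<xi>. ip \<zeta> \<xi> = L2inner \<mu> g (iota ip \<xi>))"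

end

theory Submission
  imports Defs
begin


locale uh =
  fixes sc :: "complex \<Rightarrow> 'h::ab_group_add \<Rightarrow> 'h"
    and ip :: "'h \<Rightarrow> 'h \<Rightarrow> complex"
    and star :: "'h \<Rightarrow> 'h"
    and e :: 'h
  assumes UH: "unital_hilbert_space sc ip star e"
begin

lemma CH: "complex_hilbert_space sc ip"
  using UH unfolding unital_hilbert_space_def hilbert_star_space_def by blast
lemmas CH' = CH[unfolded complex_hilbert_space_def]
lemma HS: "hilbert_star_space sc ip star"
  using UH unfolding unital_hilbert_space_def by blast
lemma star_e: "star e = e" and norm_e: "hnorm ip e = 1"
  using UH unfolding unital_hilbert_space_def by blast+
lemma sc1: "sc 1 x = x"
  by (rule CH'[THEN conjunct1, THEN spec])
lemma scmul: "sc a (sc b x) = sc (a * b) x"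
  by (rule CH'[THEN conjunct2, THEN conjunct1, THEN spec, THEN spec, THEN spec])
lemma scadd: "sc a (x + y) = sc a x + sc a y"
  by (rule CH'[THEN conjunct2, THEN conjunct2, THEN conjunct1, THEN spec, THEN spec, THEN spec])
lemma addsc: "sc (a + b) x = sc a x + sc b x"
  by (rule CH'[THEN conjunct2, THEN conjunct2, THEN conjunct2, THEN conjunct1, THEN spec, THEN spec, THEN spec])
lemma ip_add1: "ip (x + y) z = ip x z + ip y z"
  by (rule CH'[THEN conjunct2, THEN conjunct2, THEN conjunct2, THEN conjunct2, THEN conjunct1, THEN spec, THEN spec, THEN spec])
lemma ip_sc1: "ip (sc a x) y = a * ip x y"
  by (rule CH'[THEN conjunct2, THEN conjunct2, THEN conjunct2, THEN conjunct2, THEN conjunct2, THEN conjunct1, THEN spec, THEN spec, THEN spec])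
lemma ip_sym: "ip y x = cnj (ip x y)"
  by (rule CH'[THEN conjunct2, THEN conjunct2, THEN conjunct2, THEN conjunct2, THEN conjunct2, THEN conjunct2, THEN conjunct1, THEN spec, THEN spec])
lemma ip_im: "Im (ip x x) = 0"
  using CH'[THEN conjunct2, THEN conjunct2, THEN conjunct2, THEN conjunct2, THEN conjunct2, THEN conjunct2, THEN conjunct2, THEN conjunct1, THEN spec, of x] by blast
lemma ip_pos: "0 \<le> Re (ip x x)"
  using CH'[THEN conjunct2, THEN conjunct2, THEN conjunct2, THEN conjunct2, THEN conjunct2, THEN conjunct2, THEN conjunct2, THEN conjunct1, THEN spec, of x] by blast
lemma ip_def0: "ip x x = 0 \<Longrightarrow> x = 0"
  using CH'[THEN conjunct2, THEN conjunct2, THEN conjunct2, THEN conjunct2, THEN conjunct2, THEN conjunct2, THEN conjunct2, THEN conjunct2, THEN conjunct1, THEN spec, of x] by blast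
lemma star_add: "star (x + y) = star x + star y"
  using HS unfolding hilbert_star_space_def by blast
lemma star_sc: "star (sc a x) = sc (cnj a) (star x)"
  using HS unfolding hilbert_star_space_def by blast
lemma star_star: "star (star x) = x"
  using HS unfolding hilbert_star_space_def by blast
lemma ip_star: "ip (star x) (star y) = cnj (ip x y)"
  using HS unfolding hilbert_star_space_def by blast

lemma complete: "(\<forall>\<epsilon>>0. \<exists>N. \<forall>m\<ge>N. \<forall>n\<ge>N. hnorm ip (s m - s n) < \<epsilon>) \<Longrightarrow>
        (\<exists>l. (\<lambda>n. hnorm ip (s n - l)) \<longlonglongrightarrow> 0)"
  using CH'[THEN conjunct2, THEN conjunct2, THEN conjunct2, THEN conjunct2, THEN conjunct2, THEN conjunct2, THEN conjunct2, THEN conjunct2, THEN conjunct2, THEN spec, of s] by blast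

lemma ip_zero1[simp]: "ip 0 y = 0"
  using ip_add1[of 0 0 y] by simp
lemma ip_minus1: "ip (- x) y = - ip x y"
proof -
  have "ip x y + ip (- x) y = 0" using ip_add1[of x "-x" y] by simp
  then show ?thesis by (metis neg_eq_iff_add_eq_0)
qed
lemma ip_diff1: "ip (x - y) z = ip x z - ip y z"
  using ip_add1[of x "-y" z] ip_minus1[of y z] by simp
lemma ip_add2: "ip x (y + z) = ip x y + ip x z"
  by (metis complex_cnj_add ip_add1 ip_sym)
lemma ip_sc2: "ip x (sc a y) = cnj a * ip x y"
  by (metis complex_cnj_mult ip_sc1 ip_sym)
lemma ip_zero2[simp]: "ip x 0 = 0"
  by (metis complex_cnj_zero ip_sym ip_zero1)
lemma ip_minus2: "ip x (- y) = - ip x y"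
  by (metis complex_cnj_minus ip_minus1 ip_sym)
lemma ip_diff2: "ip x (y - z) = ip x y - ip x z"
  by (metis complex_cnj_diff ip_diff1 ip_sym)
lemma sc_zero[simp]: "sc 0 x = 0"
  using addsc[of 0 0 x] by simp
lemma sc_zero2[simp]: "sc a 0 = 0"
  using scadd[of a 0 0] by simp
lemma sc_minus: "sc (-1) x = - x"
proof -
  have "sc (-1) x + x = 0" using addsc[of "-1" 1 x] sc1 by simp
  then show ?thesis by (metis eq_neg_iff_add_eq_0)
qed
lemma sc_diff: "sc a (x - y) = sc a x - sc a y"
proof -
  have "sc a (x - y) + sc a y = sc a x" using scadd[of a "x - y" y] by simp
  then show ?thesis by (simp add: eq_diff_eq)
qed
lemma star_zero[simp]: "star 0 = 0"
  using star_add[of 0 0] by simp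
lemma star_minus: "star (- x) = - star x"
proof -
  have "star x + star (- x) = 0" using star_add[of x "-x"] by simp
  then show ?thesis by (metis neg_eq_iff_add_eq_0)
qed
lemma star_diff: "star (x - y) = star x - star y"
  using star_add[of x "-y"] star_minus[of y] by simp

lemma ip_self: "ip x x = complex_of_real (Re (ip x x))"
  using ip_im[of x] by (simp add: complex_eq_iff)
lemma hnorm_sq: "(hnorm ip x)\<^sup>2 = Re (ip x x)"
  unfolding hnorm_def using ip_pos by simp
lemma hnorm_nonneg: "0 \<le> hnorm ip x"
  unfolding hnorm_def using ip_pos by simp
lemma ip_self_norm: "ip x x = complex_of_real ((hnorm ip x)\<^sup>2)"
  using ip_self hnorm_sq by simp

lemma cauchy_schwarz: "cmod (ip x y) \<le> hnorm ip x * hnorm ip y"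
proof (cases "y = 0")
  case True then show ?thesis by (simp add: hnorm_def)
next
  case False
  define B where "B = Re (ip y y)"
  have Bpos: "B > 0"
  proof -
    have "B \<ge> 0" unfolding B_def by (rule ip_pos)
    moreover have "B \<noteq> 0"
    proof
      assume "B = 0" then have "ip y y = 0" using ip_self[of y] unfolding B_def by simp
      then show False using ip_def0 False by blast
    qed
    ultimately show ?thesis by simp
  qed
  define c where "c = ip x y"
  define a where "a = c / complex_of_real B"
  define z where "z = x - sc a y"
  have "ip z z = ip x x - cnj a * c - a * cnj c + a * cnj a * ip y y"
    unfolding z_def c_def
    by (simp add: ip_diff1 ip_diff2 ip_sc1 ip_sc2 algebra_simps ip_sym[of x y])
  also have "ip y y = complex_of_real B" using ip_self[of y] B_def by simp
  finally have eq0: "ip z z = ip x x - cnj a * c - a * cnj c + a * cnj a * complex_of_real B" .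
  have cc: "c * cnj c = complex_of_real ((cmod c)\<^sup>2)" by (rule complex_norm_square[symmetric])
  have h1: "cnj a * c = complex_of_real ((cmod c)\<^sup>2 / B)"
    unfolding a_def using cc by (simp add: mult.commute)
  have h2: "a * cnj c = complex_of_real ((cmod c)\<^sup>2 / B)"
    unfolding a_def using cc by simp
  have h3: "a * cnj a * complex_of_real B = complex_of_real ((cmod c)\<^sup>2 / B)"
    unfolding a_def using cc Bpos by (simp add: field_simps power2_eq_square)
  have "0 \<le> Re (ip z z)" by (rule ip_pos)
  also have "Re (ip z z) = Re (ip x x) - (cmod c)\<^sup>2 / B"
    unfolding eq0 h1 h2 h3 by simp
  finally have "(cmod c)\<^sup>2 \<le> Re (ip x x) * B" using Bpos by (simp add: field_simps)
  then have "(cmod c)\<^sup>2 \<le> ((hnorm ip x) * (hnorm ip y))\<^sup>2"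
    by (simp add: hnorm_sq B_def power_mult_distrib)
  then show ?thesis unfolding c_def
    using hnorm_nonneg by (meson mult_nonneg_nonneg power2_le_imp_le)
qed

end


context uh begin

lemma ip_sum1: "ip (sum f F) y = (\<Sum>b\<in>F. ip (f b) y)"
  by (induction F rule: infinite_finite_induct) (auto simp: ip_add1)
lemma ip_sum2: "ip y (sum f F) = (\<Sum>b\<in>F. ip y (f b))"
  by (induction F rule: infinite_finite_induct) (auto simp: ip_add2)

lemma hnorm_add_sq: "(hnorm ip (x + y))\<^sup>2 = (hnorm ip x)\<^sup>2 + (hnorm ip y)\<^sup>2 + 2 * Re (ip x y)"
proof -
  have "ip (x + y) (x + y) = ip x x + ip y y + (ip x y + cnj (ip x y))"
    by (simp add: ip_add1 ip_add2 ip_sym[of x y])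
  then show ?thesis by (simp add: hnorm_sq)
qed

lemma hnorm_diff_sq: "(hnorm ip (x - y))\<^sup>2 = (hnorm ip x)\<^sup>2 + (hnorm ip y)\<^sup>2 - 2 * Re (ip x y)"
proof -
  have "ip (x - y) (x - y) = ip x x + ip y y - (ip x y + cnj (ip x y))"
    by (simp add: ip_diff1 ip_diff2 ip_sym[of x y])
  then show ?thesis by (simp add: hnorm_sq)
qed

lemma hnorm_triangle: "hnorm ip (x + y) \<le> hnorm ip x + hnorm ip y"
proof -
  have "Re (ip x y) \<le> cmod (ip x y)" by (rule complex_Re_le_cmod)
  also have "\<dots> \<le> hnorm ip x * hnorm ip y" by (rule cauchy_schwarz)
  finally have "(hnorm ip (x + y))\<^sup>2 \<le> (hnorm ip x + hnorm ip y)\<^sup>2"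
    unfolding hnorm_add_sq by (simp add: power2_sum)
  then show ?thesis using hnorm_nonneg
    by (meson add_nonneg_nonneg power2_le_imp_le)
qed

lemma hnorm_minus: "hnorm ip (- x) = hnorm ip x"
  unfolding hnorm_def by (simp add: ip_minus1 ip_minus2)

lemma hnorm_commute: "hnorm ip (x - y) = hnorm ip (y - x)"
  by (metis hnorm_minus minus_diff_eq)

lemma hnorm_triangle_diff: "hnorm ip (x - z) \<le> hnorm ip (x - y) + hnorm ip (y - z)"
  using hnorm_triangle[of "x - y" "y - z"] by simp

lemma hnorm_rev: "\<bar>hnorm ip x - hnorm ip y\<bar> \<le> hnorm ip (x - y)"
proof -
  have "hnorm ip x \<le> hnorm ip (x - y) + hnorm ip y" using hnorm_triangle[of "x - y" y] by simp
  moreover have "hnorm ip y \<le> hnorm ip (x - y) + hnorm ip x"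
    using hnorm_triangle[of "y - x" x] hnorm_commute[of x y] by simp
  ultimately show ?thesis by linarith
qed

lemma hnorm_sc: "hnorm ip (sc a x) = cmod a * hnorm ip x"
proof -
  have "ip (sc a x) (sc a x) = (a * cnj a) * ip x x" by (simp add: ip_sc1 ip_sc2)
  also have "a * cnj a = complex_of_real ((cmod a)\<^sup>2)" by (rule complex_norm_square[symmetric])
  finally have "Re (ip (sc a x) (sc a x)) = (cmod a)\<^sup>2 * Re (ip x x)" by simp
  then show ?thesis unfolding hnorm_def by (simp add: real_sqrt_mult)
qed

lemma hnorm_zero[simp]: "hnorm ip 0 = 0"
  unfolding hnorm_def by simp

lemma hnorm_eq0: "hnorm ip x = 0 \<Longrightarrow> x = 0"
  using ip_def0 ip_self_norm by force

lemma herm_real: "star x = x \<Longrightarrow> star y = y \<Longrightarrow> Im (ip x y) = 0"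
  using ip_star[of x y] by (metis cnj.simps(2) neg_equal_zero)

lemma bessel:
  assumes "finite F" and on: "\<forall>b\<in>F. \<forall>c\<in>F. ip b c = (if b = c then 1 else 0)"
  shows "(\<Sum>b\<in>F. (cmod (ip x b))\<^sup>2) \<le> (hnorm ip x)\<^sup>2"
proof -
  define S where "S = (\<Sum>b\<in>F. sc (ip x b) b)"
  define Q where "Q = (\<Sum>b\<in>F. complex_of_real ((cmod (ip x b))\<^sup>2))"
  have sq: "\<And>z. z * cnj z = (complex_of_real (cmod z))\<^sup>2" "\<And>z. cnj z * z = (complex_of_real (cmod z))\<^sup>2"
    using complex_norm_square by (auto simp: mult.commute)
  have xS: "ip x S = Q"
    unfolding S_def Q_def ip_sum2 by (intro sum.cong refl) (simp add: ip_sc2 sq mult.commute)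
  have Sx: "ip S x = Q"
    unfolding S_def Q_def ip_sum1 by (intro sum.cong refl) (simp add: ip_sc1 ip_sc2 ip_sym[of _ x] sq)
  have SS: "ip S S = Q"
  proof -
    have "ip S S = (\<Sum>b\<in>F. \<Sum>c\<in>F. cnj (ip x b) * ip x c * ip c b)"
      unfolding S_def ip_sum1 ip_sum2 by (intro sum.cong refl) (simp add: ip_sc1 ip_sc2 mult.assoc)
    also have "\<dots> = (\<Sum>b\<in>F. ip x b * cnj (ip x b))"
    proof (intro sum.cong refl)
      fix b assume b: "b \<in> F"
      have "(\<Sum>c\<in>F. cnj (ip x b) * ip x c * ip c b) = (\<Sum>c\<in>F. if c = b then cnj (ip x b) * ip x b else 0)"
        using b on by (intro sum.cong refl) auto
      also have "\<dots> = ip x b * cnj (ip x b)" using b assms(1) by (simp add: sum.delta mult.commute)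
      finally show "(\<Sum>c\<in>F. cnj (ip x b) * ip x c * ip c b) = ip x b * cnj (ip x b)" .
    qed
    also have "\<dots> = Q" unfolding Q_def using sq by simp
    finally show ?thesis .
  qed
  have "ip (x - S) (x - S) = ip x x - Q"
    by (simp add: ip_diff1 ip_diff2 xS Sx SS)
  then have "0 \<le> Re (ip x x) - Re Q" using ip_pos[of "x - S"] by simp
  moreover have "Re Q = (\<Sum>b\<in>F. (cmod (ip x b))\<^sup>2)" unfolding Q_def by (simp add: Re_sum)
  ultimately show ?thesis by (simp add: hnorm_sq)
qed

end

locale uhX = uh +
  fixes X
  defines "X \<equiv> state_space ip star e"
begin

lemma ip_ee: "ip e e = 1"
  using norm_e ip_self_norm[of e] by simp

lemma X_E: assumes "t \<in> X"
  obtains \<eta>0 where "t = \<eta>0 + e" "ip \<eta>0 e = 0" "star \<eta>0 = \<eta>0" "hnorm ip \<eta>0 \<le> 1"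
  using assms unfolding X_def state_space_def herm_perp_def by blast

lemma X_star: "t \<in> X \<Longrightarrow> star t = t"
  by (erule X_E) (simp add: star_add star_e)

lemma X_e: assumes "t \<in> X" shows "ip e t = 1"
proof -
  obtain \<eta>0 where h: "t = \<eta>0 + e" "ip \<eta>0 e = 0" using assms by (rule X_E)
  have "ip e \<eta>0 = cnj (ip \<eta>0 e)" by (rule ip_sym)
  then show ?thesis unfolding h(1) ip_add2 using h(2) ip_ee by simp
qed

lemma X_norm: assumes "t \<in> X" shows "(hnorm ip t)\<^sup>2 \<le> 2"
proof -
  obtain \<eta>0 where h: "t = \<eta>0 + e" "ip \<eta>0 e = 0" "hnorm ip \<eta>0 \<le> 1"
    using assms by (rule X_E)
  have "(hnorm ip t)\<^sup>2 = (hnorm ip \<eta>0)\<^sup>2 + 1" unfolding h(1) hnorm_add_sq using h norm_e by simp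
  also have "(hnorm ip \<eta>0)\<^sup>2 \<le> 1" using h(3) hnorm_nonneg by (simp add: abs_square_le_1)
  finally show ?thesis by simp
qed

lemma X_bound: assumes "t \<in> X" shows "cmod (ip \<zeta> t) \<le> hnorm ip \<zeta> * sqrt 2"
proof -
  have "hnorm ip t \<le> sqrt 2" using X_norm[OF assms] hnorm_nonneg
    by (metis real_le_rsqrt)
  then show ?thesis using cauchy_schwarz[of \<zeta> t] hnorm_nonneg
    by (meson mult_left_mono order_trans)
qed

lemma X_perp: assumes "t \<in> X" "ip \<zeta> e = 0" shows "cmod (ip \<zeta> t) \<le> hnorm ip \<zeta>"
proof -
  obtain \<eta>0 where h: "t = \<eta>0 + e" "hnorm ip \<eta>0 \<le> 1"
    using assms(1) by (rule X_E)
  have "ip \<zeta> t = ip \<zeta> \<eta>0" unfolding h(1) using assms(2) by (simp add: ip_add2)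
  then have "cmod (ip \<zeta> t) \<le> hnorm ip \<zeta> * hnorm ip \<eta>0" using cauchy_schwarz by simp
  also have "\<dots> \<le> hnorm ip \<zeta>" using h(2) hnorm_nonneg by (simp add: mult_left_le)
  finally show ?thesis .
qed

lemma X_herm: "t \<in> X \<Longrightarrow> star \<zeta> = \<zeta> \<Longrightarrow> Im (ip \<zeta> t) = 0"
  using herm_real X_star by blast

lemma X_star_ip: "t \<in> X \<Longrightarrow> ip (star \<zeta>) t = cnj (ip \<zeta> t)"
  using ip_star[of \<zeta> t] X_star by simp

end


lemma borel_measurable_cnj[measurable (raw)]:
  "f \<in> borel_measurable M \<Longrightarrow> (\<lambda>x. cnj (f x)) \<in> borel_measurable M"
  by (rule borel_measurable_continuous_on[OF linear_continuous_on[OF bounded_linear_cnj]])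

lemma cnj_sq: "cnj z * z = (complex_of_real (cmod z))\<^sup>2" "z * cnj z = (complex_of_real (cmod z))\<^sup>2"
  using complex_norm_square[of z] by (simp_all add: mult.commute)

lemma twoab: "2 * ((a::real) * b) \<le> a\<^sup>2 + b\<^sup>2"
proof -
  have "0 \<le> (a - b)\<^sup>2" by simp
  then show ?thesis by (simp add: power2_diff)
qed

lemma L2I: "f \<in> borel_measurable M \<Longrightarrow> integrable M (\<lambda>t. (cmod (f t))\<^sup>2) \<Longrightarrow> f \<in> L2 M"
  unfolding L2_def by simp
lemma L2_meas: "f \<in> L2 M \<Longrightarrow> f \<in> borel_measurable M"
  unfolding L2_def by simp
lemma L2_int: "f \<in> L2 M \<Longrightarrow> integrable M (\<lambda>t. (cmod (f t))\<^sup>2)"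
  unfolding L2_def by simp

lemma L2_prod_int:
  assumes "f \<in> L2 M" "g \<in> L2 M"
  shows "integrable M (\<lambda>t. f t * cnj (g t))"
proof (rule Bochner_Integration.integrable_bound)
  show "integrable M (\<lambda>t. (cmod (f t))\<^sup>2 + (cmod (g t))\<^sup>2)"
    using assms by (intro Bochner_Integration.integrable_add L2_int)
  show "(\<lambda>t. f t * cnj (g t)) \<in> borel_measurable M" using L2_meas[OF assms(1)] L2_meas[OF assms(2)] by measurable
  show "AE x in M. norm (f x * cnj (g x)) \<le> norm ((cmod (f x))\<^sup>2 + (cmod (g x))\<^sup>2)"
  proof (intro AE_I2)
    fix x
    have "2 * (cmod (f x) * cmod (g x)) \<le> (cmod (f x))\<^sup>2 + (cmod (g x))\<^sup>2"
      by (rule twoab)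
    moreover have "cmod (f x) * cmod (g x) \<ge> 0" by simp
    ultimately have "cmod (f x) * cmod (g x) \<le> (cmod (f x))\<^sup>2 + (cmod (g x))\<^sup>2" by linarith
    then show "norm (f x * cnj (g x)) \<le> norm ((cmod (f x))\<^sup>2 + (cmod (g x))\<^sup>2)"
      by (simp add: norm_mult)
  qed
qed

lemma L2_add: assumes "f \<in> L2 M" "g \<in> L2 M" shows "(\<lambda>t. f t + g t) \<in> L2 M"
proof (rule L2I)
  show "(\<lambda>t. f t + g t) \<in> borel_measurable M" using L2_meas[OF assms(1)] L2_meas[OF assms(2)] by measurable
  show "integrable M (\<lambda>t. (cmod (f t + g t))\<^sup>2)"
  proof (rule Bochner_Integration.integrable_bound)
    show "integrable M (\<lambda>t. 2 * (cmod (f t))\<^sup>2 + 2 * (cmod (g t))\<^sup>2)"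
      using assms by (intro Bochner_Integration.integrable_add Bochner_Integration.integrable_mult_right L2_int)
    show "(\<lambda>t. (cmod (f t + g t))\<^sup>2) \<in> borel_measurable M" using L2_meas[OF assms(1)] L2_meas[OF assms(2)] by measurable
    show "AE x in M. norm ((cmod (f x + g x))\<^sup>2) \<le> norm (2 * (cmod (f x))\<^sup>2 + 2 * (cmod (g x))\<^sup>2)"
    proof (intro AE_I2)
      fix x
      have "cmod (f x + g x) \<le> cmod (f x) + cmod (g x)" by (rule norm_triangle_ineq)
      then have "(cmod (f x + g x))\<^sup>2 \<le> (cmod (f x) + cmod (g x))\<^sup>2"
        by (simp add: power_mono)
      also have "\<dots> \<le> 2 * (cmod (f x))\<^sup>2 + 2 * (cmod (g x))\<^sup>2"
        using twoab[of "cmod (f x)" "cmod (g x)"] by (simp add: power2_sum)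
      finally show "norm ((cmod (f x + g x))\<^sup>2) \<le> norm (2 * (cmod (f x))\<^sup>2 + 2 * (cmod (g x))\<^sup>2)"
        by simp
    qed
  qed
qed

lemma L2_scale: assumes "f \<in> L2 M" shows "(\<lambda>t. c * f t) \<in> L2 M"
proof (rule L2I)
  show "(\<lambda>t. c * f t) \<in> borel_measurable M" using L2_meas[OF assms(1)] by measurable
  have "integrable M (\<lambda>t. (cmod c)\<^sup>2 * (cmod (f t))\<^sup>2)" using L2_int[OF assms] by simp
  then show "integrable M (\<lambda>t. (cmod (c * f t))\<^sup>2)" by (simp add: norm_mult power_mult_distrib)
qed

lemma L2_minus: "f \<in> L2 M \<Longrightarrow> (\<lambda>t. - f t) \<in> L2 M"
  using L2_scale[of f M "-1"] by simp

lemma L2_diff: "f \<in> L2 M \<Longrightarrow> g \<in> L2 M \<Longrightarrow> (\<lambda>t. f t - g t) \<in> L2 M"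
  using L2_add[of f M "\<lambda>t. - g t"] L2_minus[of g M] by simp

lemma L2_cnj: assumes "f \<in> L2 M" shows "(\<lambda>t. cnj (f t)) \<in> L2 M"
  using assms borel_measurable_cnj[of f M] unfolding L2_def by simp

lemma L2_bounded: assumes "finite_measure M" "f \<in> borel_measurable M" "\<And>t. t \<in> space M \<Longrightarrow> cmod (f t) \<le> C"
  shows "f \<in> L2 M"
proof (rule L2I)
  show "f \<in> borel_measurable M" by fact
  show "integrable M (\<lambda>t. (cmod (f t))\<^sup>2)"
  proof (rule finite_measure.integrable_const_bound[OF assms(1)])
    show "AE x in M. norm ((cmod (f x))\<^sup>2) \<le> C\<^sup>2"
      using assms(3) by (intro AE_I2) (simp add: power_mono)
    show "(\<lambda>t. (cmod (f t))\<^sup>2) \<in> borel_measurable M" using assms(2) by measurable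
  qed
qed

lemma L2_const: "finite_measure M \<Longrightarrow> (\<lambda>t. c) \<in> L2 M"
  by (rule L2_bounded[where C="cmod c"]) auto

lemma L2norm_nonneg: "0 \<le> L2norm M f"
  unfolding L2norm_def by (simp add: integral_nonneg_AE)

lemma L2norm_sq: "(L2norm M f)\<^sup>2 = (\<integral>t. (cmod (f t))\<^sup>2 \<partial>M)"
  unfolding L2norm_def by (simp add: integral_nonneg_AE)

lemma L2inner_self: "L2inner M f f = complex_of_real ((L2norm M f)\<^sup>2)"
proof -
  have "L2inner M f f = (\<integral>t. complex_of_real ((cmod (f t))\<^sup>2) \<partial>M)"
    unfolding L2inner_def by (intro Bochner_Integration.integral_cong refl) (rule complex_norm_square[symmetric])
  then show ?thesis by (simp only: L2norm_sq integral_complex_of_real)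
qed

lemma L2inner_add1: "f \<in> L2 M \<Longrightarrow> g \<in> L2 M \<Longrightarrow> h \<in> L2 M \<Longrightarrow>
    L2inner M (\<lambda>t. f t + g t) h = L2inner M f h + L2inner M g h"
  unfolding L2inner_def using L2_prod_int[of f M h] L2_prod_int[of g M h]
  by (simp add: distrib_right)

lemma L2inner_diff1: "f \<in> L2 M \<Longrightarrow> g \<in> L2 M \<Longrightarrow> h \<in> L2 M \<Longrightarrow>
    L2inner M (\<lambda>t. f t - g t) h = L2inner M f h - L2inner M g h"
  unfolding L2inner_def using L2_prod_int[of f M h] L2_prod_int[of g M h]
  by (simp add: left_diff_distrib)

lemma L2inner_scale1: "L2inner M (\<lambda>t. c * f t) h = c * L2inner M f h"
  unfolding L2inner_def by (simp add: mult.assoc)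

lemma L2inner_sym: "L2inner M g f = cnj (L2inner M f g)"
proof -
  have "cnj (L2inner M f g) = (\<integral>t. cnj (f t * cnj (g t)) \<partial>M)" unfolding L2inner_def by (rule Bochner_Integration.integral_cnj[symmetric])
  also have "\<dots> = L2inner M g f" unfolding L2inner_def by (simp add: mult.commute)
  finally show ?thesis by simp
qed

lemma L2inner_add2: "f \<in> L2 M \<Longrightarrow> g \<in> L2 M \<Longrightarrow> h \<in> L2 M \<Longrightarrow>
    L2inner M h (\<lambda>t. f t + g t) = L2inner M h f + L2inner M h g"
  using L2inner_sym[of M h "\<lambda>t. f t + g t"] L2inner_sym[of M h f] L2inner_sym[of M h g] L2inner_add1[of f M g h] by simp

lemma L2inner_diff2: "f \<in> L2 M \<Longrightarrow> g \<in> L2 M \<Longrightarrow> h \<in> L2 M \<Longrightarrow>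
    L2inner M h (\<lambda>t. f t - g t) = L2inner M h f - L2inner M h g"
  using L2inner_sym[of M h "\<lambda>t. f t - g t"] L2inner_sym[of M h f] L2inner_sym[of M h g] L2inner_diff1[of f M g h] by simp

lemma L2inner_scale2: "L2inner M h (\<lambda>t. c * f t) = cnj c * L2inner M h f"
  using L2inner_sym[of M h "\<lambda>t. c * f t"] L2inner_sym[of M h f] L2inner_scale1[of M c f h] by simp

lemma L2inner_cong: "AE t in M. f t = f' t \<Longrightarrow> AE t in M. g t = g' t \<Longrightarrow>
   f \<in> borel_measurable M \<Longrightarrow> f' \<in> borel_measurable M \<Longrightarrow> g \<in> borel_measurable M \<Longrightarrow> g' \<in> borel_measurable M \<Longrightarrow>
   L2inner M f g = L2inner M f' g'"
  unfolding L2inner_def by (rule integral_cong_AE) (auto elim: AE_mp)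

lemma L2norm_cong: "AE t in M. f t = f' t \<Longrightarrow>
   f \<in> borel_measurable M \<Longrightarrow> f' \<in> borel_measurable M \<Longrightarrow> L2norm M f = L2norm M f'"
  unfolding L2norm_def by (subst integral_cong_AE[where g="\<lambda>t. (cmod (f' t))\<^sup>2"]) (auto elim: AE_mp)

lemma L2_expand:
  assumes "a \<in> L2 M" "b \<in> L2 M"
  shows "(L2norm M (\<lambda>t. a t - s * b t))\<^sup>2 =
    (L2norm M a)\<^sup>2 - 2 * Re (cnj s * L2inner M a b) + (cmod s)\<^sup>2 * (L2norm M b)\<^sup>2"
proof -
  have sb: "(\<lambda>t. s * b t) \<in> L2 M" using assms L2_scale by blast
  have "complex_of_real ((L2norm M (\<lambda>t. a t - s * b t))\<^sup>2) = L2inner M (\<lambda>t. a t - s * b t) (\<lambda>t. a t - s * b t)"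
    by (simp add: L2inner_self)
  also have "\<dots> = L2inner M a a - cnj s * L2inner M a b - s * L2inner M b a + s * cnj s * L2inner M b b"
    using assms sb L2_diff[OF assms(1) sb]
    by (simp add: L2inner_diff1 L2inner_diff2 L2inner_scale1 L2inner_scale2 algebra_simps)
  also have "L2inner M b a = cnj (L2inner M a b)" by (rule L2inner_sym)
  also have "s * cnj s = complex_of_real ((cmod s)\<^sup>2)" by (rule complex_norm_square[symmetric])
  finally have "complex_of_real ((L2norm M (\<lambda>t. a t - s * b t))\<^sup>2) =
     L2inner M a a - cnj s * L2inner M a b - cnj (cnj s * L2inner M a b) + complex_of_real ((cmod s)\<^sup>2) * L2inner M b b"
    by simp
  then have "(L2norm M (\<lambda>t. a t - s * b t))\<^sup>2 = Re (L2inner M a a - cnj s * L2inner M a b - cnj (cnj s * L2inner M a b) + complex_of_real ((cmod s)\<^sup>2) * L2inner M b b)"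
    by (metis Re_complex_of_real)
  then have "(L2norm M (\<lambda>t. a t - s * b t))\<^sup>2 = (L2norm M a)\<^sup>2 - 2 * Re (cnj s * L2inner M a b) + (cmod s)\<^sup>2 * (L2norm M b)\<^sup>2"
    by (simp add: L2inner_self)
  then show ?thesis by (simp add: L2inner_self)
qed

lemma L2_cs:
  assumes "a \<in> L2 M" "b \<in> L2 M"
  shows "cmod (L2inner M a b) \<le> L2norm M a * L2norm M b"
proof -
  define A where "A = (L2norm M a)\<^sup>2"
  define B where "B = (L2norm M b)\<^sup>2"
  define c where "c = L2inner M a b"
  have ex: "\<And>s. 0 \<le> A - 2 * Re (cnj s * c) + (cmod s)\<^sup>2 * B"
    using L2_expand[OF assms] unfolding A_def B_def c_def by (metis zero_le_power2)
  have "(cmod c)\<^sup>2 \<le> A * B"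
  proof (cases "B = 0")
    case True
    have "c = 0"
    proof (rule ccontr)
      assume "c \<noteq> 0"
      define s where "s = complex_of_real ((A + 1) / (cmod c)\<^sup>2) * c"
      have "cnj s * c = complex_of_real ((A + 1) / (cmod c)\<^sup>2) * (cnj c * c)" unfolding s_def by simp
      also have "cnj c * c = complex_of_real ((cmod c)\<^sup>2)" by (simp add: cnj_sq)
      finally have "Re (cnj s * c) = A + 1" using \<open>c \<noteq> 0\<close> by simp
      then have "0 \<le> A - 2 * (A + 1)" using ex[of s] True by simp
      moreover have "0 \<le> A" by (simp add: A_def)
      ultimately show False by (smt (verit))
    qed
    then show ?thesis using True by simp
  next
    case False
    then have Bp: "B > 0" unfolding B_def by (simp add: L2norm_nonneg)
    define s where "s = c / complex_of_real B"
    have "cnj s * c = complex_of_real ((cmod c)\<^sup>2 / B)"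
      unfolding s_def by (simp add: cnj_sq)
    moreover have "(cmod s)\<^sup>2 * B = (cmod c)\<^sup>2 / B" unfolding s_def using Bp
      by (simp add: norm_divide power_divide power2_eq_square)
    ultimately have "0 \<le> A - (cmod c)\<^sup>2 / B" using ex[of s] by simp
    then show ?thesis using Bp by (simp add: field_simps)
  qed
  then have "(cmod c)\<^sup>2 \<le> (L2norm M a * L2norm M b)\<^sup>2" unfolding A_def B_def by (simp add: power_mult_distrib)
  then show ?thesis unfolding c_def using L2norm_nonneg
    by (meson mult_nonneg_nonneg power2_le_imp_le)
qed


lemma L2_zero: "(\<lambda>t. 0) \<in> L2 M"
  by (rule L2I) auto

lemma L2norm_zero[simp]: "L2norm M (\<lambda>t. 0) = 0"
  unfolding L2norm_def by simp

lemma L2norm_ofreal_cmod: "L2norm M (\<lambda>t. complex_of_real (cmod (f t))) = L2norm M f"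
  unfolding L2norm_def by simp

lemma L2_ofreal_cmod: "f \<in> L2 M \<Longrightarrow> (\<lambda>t. complex_of_real (cmod (f t))) \<in> L2 M"
  unfolding L2_def by auto

lemma L2_triangle:
  assumes "a \<in> L2 M" "b \<in> L2 M"
  shows "L2norm M (\<lambda>t. a t + b t) \<le> L2norm M a + L2norm M b"
proof -
  have eq: "(\<lambda>t. a t - (-1) * b t) = (\<lambda>t. a t + b t)" by simp
  have "(L2norm M (\<lambda>t. a t + b t))\<^sup>2 = (L2norm M a)\<^sup>2 + 2 * Re (L2inner M a b) + (L2norm M b)\<^sup>2"
    using L2_expand[OF assms, of "-1"] unfolding eq by simp
  also have "Re (L2inner M a b) \<le> L2norm M a * L2norm M b"
    using L2_cs[OF assms] complex_Re_le_cmod order_trans by blast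
  finally have "(L2norm M (\<lambda>t. a t + b t))\<^sup>2 \<le> (L2norm M a + L2norm M b)\<^sup>2"
    by (simp add: power2_sum)
  then show ?thesis using L2norm_nonneg by (meson add_nonneg_nonneg power2_le_imp_le)
qed

lemma minkowski:
  assumes "finite F" "\<And>k. k \<in> F \<Longrightarrow> f k \<in> L2 M"
  shows "(\<lambda>t. \<Sum>k\<in>F. f k t) \<in> L2 M \<and> L2norm M (\<lambda>t. \<Sum>k\<in>F. f k t) \<le> (\<Sum>k\<in>F. L2norm M (f k))"
  using assms
proof (induction F rule: finite_induct)
  case empty
  then show ?case using L2_zero by simp
next
  case (insert x F)
  have fx: "f x \<in> L2 M" using insert by simp
  have IH: "(\<lambda>t. \<Sum>k\<in>F. f k t) \<in> L2 M" "L2norm M (\<lambda>t. \<Sum>k\<in>F. f k t) \<le> (\<Sum>k\<in>F. L2norm M (f k))"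
    using insert by auto
  have eq: "(\<lambda>t. \<Sum>k\<in>insert x F. f k t) = (\<lambda>t. f x t + (\<Sum>k\<in>F. f k t))"
    using insert by simp
  show ?case unfolding eq
  proof
    show "(\<lambda>t. f x t + (\<Sum>k\<in>F. f k t)) \<in> L2 M" using L2_add[OF fx IH(1)] by simp
    have "L2norm M (\<lambda>t. f x t + (\<Sum>k\<in>F. f k t)) \<le> L2norm M (f x) + L2norm M (\<lambda>t. \<Sum>k\<in>F. f k t)"
      using L2_triangle[OF fx IH(1)] by simp
    also have "\<dots> \<le> L2norm M (f x) + (\<Sum>k\<in>F. L2norm M (f k))" using IH(2) by simp
    finally show "L2norm M (\<lambda>t. f x t + (\<Sum>k\<in>F. f k t)) \<le> (\<Sum>k\<in>insert x F. L2norm M (f k))"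
      using insert by simp
  qed
qed

lemma mc1:
  fixes u :: "nat \<Rightarrow> 'a \<Rightarrow> real"
  assumes int: "\<And>N. integrable M (u N)" and nn: "\<And>N t. 0 \<le> u N t"
    and mono: "\<And>N t. u N t \<le> u (Suc N) t" and bnd: "\<And>N. integral\<^sup>L M (u N) \<le> B"
  shows "AE t in M. bdd_above (range (\<lambda>N. u N t))"
proof -
  have meas[measurable]: "\<And>N. u N \<in> borel_measurable M" using int by auto
  have inc: "incseq (\<lambda>N t. ennreal (u N t))"
    by (intro incseq_SucI le_funI ennreal_leI mono)
  have "(\<integral>\<^sup>+t. (SUP N. ennreal (u N t)) \<partial>M) = (SUP N. \<integral>\<^sup>+t. ennreal (u N t) \<partial>M)"
    using nn_integral_monotone_convergence_SUP[OF inc] by simp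
  also have "\<dots> \<le> ennreal B"
  proof (rule SUP_least)
    fix N
    have "(\<integral>\<^sup>+t. ennreal (u N t) \<partial>M) = ennreal (integral\<^sup>L M (u N))"
      by (rule nn_integral_eq_integral[OF int]) (simp add: nn)
    also have "\<dots> \<le> ennreal B" by (rule ennreal_leI[OF bnd])
    finally show "(\<integral>\<^sup>+t. ennreal (u N t) \<partial>M) \<le> ennreal B" .
  qed
  finally have fin: "(\<integral>\<^sup>+t. (SUP N. ennreal (u N t)) \<partial>M) \<noteq> \<infinity>"
    using ennreal_less_top neq_top_trans by (metis infinity_ennreal_def less_le)
  have "AE t in M. (SUP N. ennreal (u N t)) \<noteq> \<infinity>"
    by (rule nn_integral_PInf_AE) (measurable, rule fin)
  then show ?thesis
  proof (rule AE_mp[OF _ AE_I2], intro impI)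
    fix t assume ne: "(SUP N. ennreal (u N t)) \<noteq> \<infinity>"
    then have lt: "(SUP N. ennreal (u N t)) < top" by (metis infinity_ennreal_def top.not_eq_extremum)
    show "bdd_above (range (\<lambda>N. u N t))"
    proof (rule bdd_aboveI2)
      fix N
      have "ennreal (u N t) \<le> (SUP N. ennreal (u N t))" by (rule SUP_upper) simp
      then have "enn2real (ennreal (u N t)) \<le> enn2real (SUP N. ennreal (u N t))" using lt by (rule enn2real_mono)
      then show "u N t \<le> enn2real (SUP N. ennreal (u N t))" using nn by simp
    qed
  qed
qed

lemma mc2:
  fixes u :: "nat \<Rightarrow> 'a \<Rightarrow> real"
  assumes int: "\<And>N. integrable M (u N)" and nn: "\<And>N t. 0 \<le> u N t"
    and mono: "\<And>N t. u N t \<le> u (Suc N) t" and bnd: "\<And>N. integral\<^sup>L M (u N) \<le> B"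
    and wm: "w \<in> borel_measurable M" and wle: "AE t in M. 0 \<le> w t \<and> w t \<le> (SUP N. u N t)"
  shows "integrable M w \<and> integral\<^sup>L M w \<le> B"
proof -
  have meas[measurable]: "\<And>N. u N \<in> borel_measurable M" using int by auto
  have bdd: "AE t in M. bdd_above (range (\<lambda>N. u N t))" by (rule mc1[where u=u, OF int nn mono bnd])
  define L where "L t = lim (\<lambda>N. u N t)" for t
  have Lm: "L \<in> borel_measurable M" unfolding L_def by measurable
  have incp: "\<And>t. incseq (\<lambda>N. u N t)" by (intro incseq_SucI mono)
  have lim: "AE t in M. (\<lambda>N. u N t) \<longlonglongrightarrow> L t \<and> L t = (SUP N. u N t)"
    using bdd
  proof (rule AE_mp[OF _ AE_I2], intro impI)
    fix t assume b: "bdd_above (range (\<lambda>N. u N t))"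
    have "(\<lambda>N. u N t) \<longlonglongrightarrow> (SUP N. u N t)" by (rule LIMSEQ_incseq_SUP[OF b incp])
    then show "(\<lambda>N. u N t) \<longlonglongrightarrow> L t \<and> L t = (SUP N. u N t)"
      unfolding L_def by (simp add: limI)
  qed
  have inci: "incseq (\<lambda>N. integral\<^sup>L M (u N))"
    by (intro incseq_SucI integral_mono int mono)
  have bddi: "bdd_above (range (\<lambda>N. integral\<^sup>L M (u N)))" using bnd by (intro bdd_aboveI2)
  have ilim: "(\<lambda>N. integral\<^sup>L M (u N)) \<longlonglongrightarrow> (SUP N. integral\<^sup>L M (u N))"
    by (rule LIMSEQ_incseq_SUP[OF bddi inci])
  have Lint: "integrable M L" and Leq: "integral\<^sup>L M L = (SUP N. integral\<^sup>L M (u N))"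
    using integral_monotone_convergence_nonneg[OF int _ _ _ ilim Lm] lim nn incp
    by (auto simp: mono_def incseq_def elim: AE_mp)
  have "(SUP N. integral\<^sup>L M (u N)) \<le> B" using bnd by (intro cSUP_least) auto
  have wint: "integrable M w"
  proof (rule Bochner_Integration.integrable_bound[OF Lint wm])
    show "AE x in M. norm (w x) \<le> norm (L x)"
      using wle lim by eventually_elim auto
  qed
  have "integral\<^sup>L M w \<le> integral\<^sup>L M L"
    using wle lim by (intro integral_mono_AE wint Lint) (auto elim: AE_mp)
  then show ?thesis using wint Leq \<open>(SUP N. integral\<^sup>L M (u N)) \<le> B\<close> by simp
qed

lemma geom_half: "(\<Sum>k<N. (1/2::real)^k) \<le> 2"
proof -
  have "(\<Sum>k<N. (1/2::real)^k) = (1 - (1/2)^N) / (1 - 1/2)" by (simp add: sum_gp_strict)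
  also have "\<dots> \<le> 2" by simp
  finally show ?thesis .
qed

lemma RF:
  fixes h :: "nat \<Rightarrow> 'a \<Rightarrow> complex"
  assumes L2h: "\<And>n. h n \<in> L2 M" and small: "\<And>n. L2norm M (\<lambda>t. h (Suc n) t - h n t) \<le> C * (1/2)^n"
  shows "\<exists>g \<in> L2 M. (\<lambda>n. L2norm M (\<lambda>t. g t - h n t)) \<longlonglongrightarrow> 0"
proof -
  define d where "d n t = h (Suc n) t - h n t" for n t
  have dL2: "\<And>n. d n \<in> L2 M" unfolding d_def[abs_def] using L2h by (intro L2_diff)
  have hm[measurable]: "\<And>n. h n \<in> borel_measurable M" using L2h L2_meas by blast
  have dm[measurable]: "\<And>n. d n \<in> borel_measurable M" using dL2 L2_meas by blast
  have dsmall: "\<And>n. L2norm M (d n) \<le> C * (1/2)^n" unfolding d_def[abs_def] by (rule small)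
  have C0: "0 \<le> C" using dsmall[of 0] L2norm_nonneg[of M "d 0"] by simp
  define u where "u n0 N t = (\<Sum>k<N. cmod (d (n0 + k) t))\<^sup>2" for n0 N t
  define S where "S n0 N t = complex_of_real (\<Sum>k<N. cmod (d (n0 + k) t))" for n0 N t
  have SL2: "S n0 N \<in> L2 M \<and> L2norm M (S n0 N) \<le> 2 * C * (1/2)^n0" for n0 N
  proof -
    have mk: "(\<lambda>t. \<Sum>k\<in>{..<N}. complex_of_real (cmod (d (n0 + k) t))) \<in> L2 M \<and>
       L2norm M (\<lambda>t. \<Sum>k\<in>{..<N}. complex_of_real (cmod (d (n0 + k) t))) \<le> (\<Sum>k\<in>{..<N}. L2norm M (\<lambda>t. complex_of_real (cmod (d (n0 + k) t))))"
      by (rule minkowski) (auto intro: L2_ofreal_cmod dL2)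
    have eqS: "S n0 N = (\<lambda>t. \<Sum>k\<in>{..<N}. complex_of_real (cmod (d (n0 + k) t)))"
      unfolding S_def by (simp add: fun_eq_iff)
    have "(\<Sum>k\<in>{..<N}. L2norm M (\<lambda>t. complex_of_real (cmod (d (n0 + k) t)))) = (\<Sum>k<N. L2norm M (d (n0 + k)))"
      by (simp add: L2norm_ofreal_cmod)
    also have "\<dots> \<le> (\<Sum>k<N. C * (1/2)^(n0 + k))" by (intro sum_mono dsmall)
    also have "\<dots> = C * (1/2)^n0 * (\<Sum>k<N. (1/2)^k)" by (simp add: sum_distrib_left power_add mult.assoc)
    also have "\<dots> \<le> C * (1/2)^n0 * 2" using geom_half C0 by (intro mult_left_mono) auto
    finally show ?thesis using mk unfolding eqS by simp
  qed
  have unn: "\<And>n0 N t. 0 \<le> u n0 N t" unfolding u_def by simp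
  have umono: "\<And>n0 N t. u n0 N t \<le> u n0 (Suc N) t"
    unfolding u_def by (auto intro!: power_mono simp: sum_nonneg)
  have ueq: "u n0 N = (\<lambda>t. (cmod (S n0 N t))\<^sup>2)" for n0 N
    unfolding u_def S_def by (simp add: fun_eq_iff sum_nonneg del: of_real_sum)
  have uint: "\<And>n0 N. integrable M (u n0 N)" unfolding ueq using SL2 L2_int by blast
  have ubnd: "\<And>n0 N. integral\<^sup>L M (u n0 N) \<le> (2 * C * (1/2)^n0)\<^sup>2"
  proof -
    fix n0 N
    have "integral\<^sup>L M (u n0 N) = (L2norm M (S n0 N))\<^sup>2" unfolding ueq L2norm_sq ..
    also have "\<dots> \<le> (2 * C * (1/2)^n0)\<^sup>2" using SL2 L2norm_nonneg by (intro power_mono) auto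
    finally show "integral\<^sup>L M (u n0 N) \<le> (2 * C * (1/2)^n0)\<^sup>2" .
  qed
  have bdd: "\<And>n0. AE t in M. bdd_above (range (\<lambda>N. u n0 N t))"
    by (rule mc1[where u="u n0" for n0, OF uint unn umono ubnd])
  have conv: "AE t in M. convergent (\<lambda>n. h n t)"
    using bdd[of 0]
  proof (rule AE_mp[OF _ AE_I2], intro impI)
    fix t assume "bdd_above (range (\<lambda>N. u 0 N t))"
    then obtain K where K: "\<And>N. u 0 N t \<le> K" by (auto simp: bdd_above_def)
    have "summable (\<lambda>k. cmod (d k t))"
    proof (rule summableI_nonneg_bounded)
      show "\<And>n. 0 \<le> cmod (d n t)" by simp
      fix N
      have "(\<Sum>k<N. cmod (d k t))\<^sup>2 \<le> K" using K[of N] unfolding u_def by simp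
      then show "(\<Sum>k<N. cmod (d k t)) \<le> sqrt K" by (rule real_le_rsqrt)
    qed
    then have "summable (\<lambda>k. d k t)" by (rule summable_norm_cancel) 
    then have "(\<lambda>n. \<Sum>k<n. d k t) \<longlonglongrightarrow> suminf (\<lambda>k. d k t)" by (rule summable_LIMSEQ)
    moreover have "\<And>n. (\<Sum>k<n. d k t) = h n t - h 0 t"
      unfolding d_def by (rule sum_lessThan_telescope)
    ultimately have "(\<lambda>n. h n t - h 0 t) \<longlonglongrightarrow> suminf (\<lambda>k. d k t)" by simp
    then have "(\<lambda>n. (h n t - h 0 t) + h 0 t) \<longlonglongrightarrow> suminf (\<lambda>k. d k t) + h 0 t"
      by (intro tendsto_add tendsto_const)
    then show "convergent (\<lambda>n. h n t)" unfolding convergent_def by auto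
  qed
  define g where "g t = lim (\<lambda>n. h n t)" for t
  have gm[measurable]: "g \<in> borel_measurable M" unfolding g_def by measurable
  have gconv: "AE t in M. (\<lambda>n. h n t) \<longlonglongrightarrow> g t"
    using conv by eventually_elim (simp add: g_def convergent_LIMSEQ_iff)
  have tail: "(\<lambda>t. g t - h n0 t) \<in> L2 M \<and> L2norm M (\<lambda>t. g t - h n0 t) \<le> 2 * C * (1/2)^n0" for n0
  proof -
    have wm: "(\<lambda>t. (cmod (g t - h n0 t))\<^sup>2) \<in> borel_measurable M" by measurable
    have wle: "AE t in M. 0 \<le> (cmod (g t - h n0 t))\<^sup>2 \<and> (cmod (g t - h n0 t))\<^sup>2 \<le> (SUP N. u n0 N t)"
      using gconv bdd[of n0]
    proof (eventually_elim)
      case (elim t)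
      have "(\<lambda>N. h (N + n0) t) \<longlonglongrightarrow> g t" using elim(1) by (rule LIMSEQ_ignore_initial_segment)
      then have "(\<lambda>N. (cmod (h (N + n0) t - h n0 t))\<^sup>2) \<longlonglongrightarrow> (cmod (g t - h n0 t))\<^sup>2"
        by (intro tendsto_intros)
      moreover have "\<forall>N. (cmod (h (N + n0) t - h n0 t))\<^sup>2 \<le> (SUP N. u n0 N t)"
      proof
        fix N
        have "h (N + n0) t - h n0 t = (\<Sum>k<N. d (n0 + k) t)"
          unfolding d_def using sum_lessThan_telescope[of "\<lambda>k. h (n0 + k) t" N]
          by (simp add: add.commute)
        then have "cmod (h (N + n0) t - h n0 t) \<le> (\<Sum>k<N. cmod (d (n0 + k) t))"
          by (simp add: norm_sum)
        then have "(cmod (h (N + n0) t - h n0 t))\<^sup>2 \<le> u n0 N t"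
          unfolding u_def by (intro power_mono) auto
        also have "\<dots> \<le> (SUP N. u n0 N t)" by (rule cSUP_upper[OF _ elim(2)]) simp
        finally show "(cmod (h (N + n0) t - h n0 t))\<^sup>2 \<le> (SUP N. u n0 N t)" .
      qed
      ultimately have "(cmod (g t - h n0 t))\<^sup>2 \<le> (SUP N. u n0 N t)"
        by (intro LIMSEQ_le_const2) auto
      then show ?case by simp
    qed
    have r: "integrable M (\<lambda>t. (cmod (g t - h n0 t))\<^sup>2) \<and> integral\<^sup>L M (\<lambda>t. (cmod (g t - h n0 t))\<^sup>2) \<le> (2 * C * (1/2)^n0)\<^sup>2"
      by (rule mc2[where u="u n0", OF uint unn umono ubnd wm wle])
    have inL2: "(\<lambda>t. g t - h n0 t) \<in> L2 M" using r by (intro L2I) auto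
    have "(L2norm M (\<lambda>t. g t - h n0 t))\<^sup>2 \<le> (2 * C * (1/2)^n0)\<^sup>2" using r by (simp add: L2norm_sq)
    moreover have "0 \<le> 2 * C * (1/2::real)^n0" using C0 by simp
    ultimately have "L2norm M (\<lambda>t. g t - h n0 t) \<le> 2 * C * (1/2)^n0"
      by (rule power2_le_imp_le)
    then show ?thesis using inL2 by simp
  qed
  have gL2: "g \<in> L2 M"
  proof -
    have "(\<lambda>t. (g t - h 0 t) + h 0 t) \<in> L2 M" using tail[of 0] L2h[of 0] by (intro L2_add) auto
    then show ?thesis by simp
  qed
  have "(\<lambda>n. 2 * C * (1/2::real)^n) \<longlonglongrightarrow> 0"
    by (intro tendsto_mult_right_zero LIMSEQ_power_zero) simp
  moreover have "eventually (\<lambda>n. 0 \<le> L2norm M (\<lambda>t. g t - h n t)) sequentially"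
    by (simp add: L2norm_nonneg)
  moreover have "eventually (\<lambda>n. L2norm M (\<lambda>t. g t - h n t) \<le> 2 * C * (1/2::real)^n) sequentially"
    using tail by (intro always_eventually) blast
  ultimately have "(\<lambda>n. L2norm M (\<lambda>t. g t - h n t)) \<longlonglongrightarrow> 0"
    using tendsto_sandwich[of "\<lambda>n. 0" _ sequentially "\<lambda>n. 2 * C * (1/2::real)^n" 0] by auto
  then show ?thesis using gL2 by blast
qed


lemma L2norm_cong_sp: "(\<And>t. t \<in> space M \<Longrightarrow> f t = g t) \<Longrightarrow> L2norm M f = L2norm M g"
  unfolding L2norm_def by (simp cong: Bochner_Integration.integral_cong)

lemma L2inner_cong_sp: "(\<And>t. t \<in> space M \<Longrightarrow> f t = f' t) \<Longrightarrow> (\<And>t. t \<in> space M \<Longrightarrow> g t = g' t)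
   \<Longrightarrow> L2inner M f g = L2inner M f' g'"
  unfolding L2inner_def by (simp cong: Bochner_Integration.integral_cong)

lemma L2_cong_sp: assumes eq: "\<And>t. t \<in> space M \<Longrightarrow> f t = g t" and f: "f \<in> L2 M" shows "g \<in> L2 M"
proof (rule L2I)
  show "g \<in> borel_measurable M" using L2_meas[OF f] eq measurable_cong by metis
  show "integrable M (\<lambda>t. (cmod (g t))\<^sup>2)" using L2_int[OF f] eq by (simp cong: Bochner_Integration.integrable_cong)
qed

lemma L2norm_scale: "L2norm M (\<lambda>t. c * f t) = cmod c * L2norm M f"
  unfolding L2norm_def by (simp add: norm_mult power_mult_distrib real_sqrt_mult)

lemma L2norm_cnj: "L2norm M (\<lambda>t. cnj (f t)) = L2norm M f"
  unfolding L2norm_def by simp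

lemma le_eps: assumes "\<And>\<epsilon>. \<epsilon> > 0 \<Longrightarrow> (x::real) \<le> c * \<epsilon>" "0 \<le> c" shows "x \<le> 0"
proof (rule ccontr)
  assume "\<not> x \<le> 0"
  then have x: "x > 0" by simp
  have "x \<le> c * (x / (c + 1))" using assms(1)[of "x / (c + 1)"] x assms(2) by simp
  also have "\<dots> < x" using x assms(2) by (simp add: field_simps)
  finally show False by simp
qed

lemma L2norm_zero_AE: assumes "f \<in> L2 M" "L2norm M f = 0" shows "AE t in M. f t = 0"
proof -
  have "(\<integral>t. (cmod (f t))\<^sup>2 \<partial>M) = 0" using L2norm_sq[of M f] assms(2) by simp
  then have "AE t in M. (cmod (f t))\<^sup>2 = 0"
    using integral_nonneg_eq_0_iff_AE[OF L2_int[OF assms(1)]] by simp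
  then show ?thesis by simp
qed

locale uhM = uhX +
  fixes \<mu> :: "'h::ab_group_add measure"
  assumes MU: "unital_measure ip star e \<mu>"
begin

lemma prob: "prob_space \<mu>" and spc: "space \<mu> = X"
  and integ: "integrable \<mu> (\<lambda>t. ip \<zeta> t)" and integ_eq: "(\<integral>t. ip \<zeta> t \<partial>\<mu>) = ip \<zeta> e"
  using MU unfolding unital_measure_def X_def by auto

lemma fin: "finite_measure \<mu>" using prob by (simp add: prob_space_def)

lemma mspace: "measure \<mu> (space \<mu>) = 1" using prob by (simp add: prob_space.prob_space)

lemma ipm[measurable]: "(\<lambda>t. ip \<zeta> t) \<in> borel_measurable \<mu>"
  using integ by auto

lemma iota_eq: "iota ip \<zeta> = (\<lambda>t. ip \<zeta> t)"
  unfolding iota_def by simp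

lemma iota_L2: "iota ip \<zeta> \<in> L2 \<mu>"
  unfolding iota_eq by (rule L2_bounded[OF fin ipm, where C="hnorm ip \<zeta> * sqrt 2"]) (simp add: spc X_bound)

lemma ipL2: "(\<lambda>t. ip \<zeta> t) \<in> L2 \<mu>" using iota_L2 iota_eq by simp

lemma constL2: "(\<lambda>t. c) \<in> L2 \<mu>" by (rule L2_const[OF fin])

lemma int_const: "(\<integral>t. c \<partial>\<mu>) = (c::complex)"
  using mspace by simp

lemma int_const_r: "(\<integral>t. c \<partial>\<mu>) = (c::real)"
  using mspace by simp

lemma perp_norm: assumes "ip \<zeta> e = 0" shows "L2norm \<mu> (iota ip \<zeta>) \<le> hnorm ip \<zeta>"
proof -
  have "(\<integral>t. (cmod (ip \<zeta> t))\<^sup>2 \<partial>\<mu>) \<le> (\<integral>t. (hnorm ip \<zeta>)\<^sup>2 \<partial>\<mu>)"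
  proof (rule integral_mono)
    show "integrable \<mu> (\<lambda>t. (cmod (ip \<zeta> t))\<^sup>2)" using L2_int[OF ipL2] .
    show "integrable \<mu> (\<lambda>t. (hnorm ip \<zeta>)\<^sup>2)" using fin by (simp add: finite_measure.integrable_const)
    fix t assume "t \<in> space \<mu>"
    then show "(cmod (ip \<zeta> t))\<^sup>2 \<le> (hnorm ip \<zeta>)\<^sup>2" using X_perp[of t \<zeta>] assms spc
      by (intro power_mono) auto
  qed
  then have "(L2norm \<mu> (iota ip \<zeta>))\<^sup>2 \<le> (hnorm ip \<zeta>)\<^sup>2"
    unfolding L2norm_sq iota_eq int_const_r .
  then show ?thesis using hnorm_nonneg by (rule power2_le_imp_le)
qed

lemma ip_sum_t: "ip (x + y) t = ip x t + ip y t" by (rule ip_add1)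

definition Cl where "Cl = iota_range_closure ip \<mu>"

lemma Cl_iff: "g \<in> Cl \<longleftrightarrow> g \<in> L2 \<mu> \<and> (\<forall>\<epsilon>>0. \<exists>\<zeta>. L2norm \<mu> (\<lambda>t. g t - ip \<zeta> t) < \<epsilon>)"
  unfolding Cl_def iota_range_closure_def iota_def by simp

lemma Cl_L2: "g \<in> Cl \<Longrightarrow> g \<in> L2 \<mu>" using Cl_iff by blast

lemma Cl_ip: "(\<lambda>t. ip \<zeta> t) \<in> Cl"
  unfolding Cl_iff using ipL2 by (auto intro!: exI[of _ \<zeta>])

lemma Cl_cong: assumes g: "g \<in> Cl" and eq: "\<And>t. t \<in> space \<mu> \<Longrightarrow> g t = g' t" shows "g' \<in> Cl"
  unfolding Cl_iff
proof (intro conjI allI impI)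
  show "g' \<in> L2 \<mu>" using L2_cong_sp[OF eq Cl_L2[OF g]] .
  fix \<epsilon> :: real assume "\<epsilon> > 0"
  then obtain z where z: "L2norm \<mu> (\<lambda>t. g t - ip z t) < \<epsilon>" using g unfolding Cl_iff by blast
  have "L2norm \<mu> (\<lambda>t. g' t - ip z t) = L2norm \<mu> (\<lambda>t. g t - ip z t)"
    by (rule L2norm_cong_sp) (simp add: eq)
  then show "\<exists>\<zeta>. L2norm \<mu> (\<lambda>t. g' t - ip \<zeta> t) < \<epsilon>" using z by metis
qed

lemma Cl_add: assumes "g1 \<in> Cl" "g2 \<in> Cl" shows "(\<lambda>t. g1 t + g2 t) \<in> Cl"
  unfolding Cl_iff
proof (intro conjI allI impI)
  show "(\<lambda>t. g1 t + g2 t) \<in> L2 \<mu>" using assms Cl_L2 L2_add by blast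
  fix \<epsilon> :: real assume "\<epsilon> > 0"
  then obtain z1 z2 where z1: "L2norm \<mu> (\<lambda>t. g1 t - ip z1 t) < \<epsilon>/2" and z2: "L2norm \<mu> (\<lambda>t. g2 t - ip z2 t) < \<epsilon>/2"
    using assms unfolding Cl_iff by (meson half_gt_zero)
  have a: "(\<lambda>t. g1 t - ip z1 t) \<in> L2 \<mu>" "(\<lambda>t. g2 t - ip z2 t) \<in> L2 \<mu>"
    using assms Cl_L2 ipL2 L2_diff by blast+
  have "L2norm \<mu> (\<lambda>t. g1 t + g2 t - ip (z1 + z2) t) = L2norm \<mu> (\<lambda>t. (g1 t - ip z1 t) + (g2 t - ip z2 t))"
    by (simp add: ip_add1 algebra_simps)
  also have "\<dots> \<le> L2norm \<mu> (\<lambda>t. g1 t - ip z1 t) + L2norm \<mu> (\<lambda>t. g2 t - ip z2 t)"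
    by (rule L2_triangle[OF a])
  also have "\<dots> < \<epsilon>" using z1 z2 by simp
  finally show "\<exists>\<zeta>. L2norm \<mu> (\<lambda>t. g1 t + g2 t - ip \<zeta> t) < \<epsilon>" by blast
qed

lemma Cl_scale: assumes "g \<in> Cl" shows "(\<lambda>t. c * g t) \<in> Cl"
  unfolding Cl_iff
proof (intro conjI allI impI)
  show "(\<lambda>t. c * g t) \<in> L2 \<mu>" using assms Cl_L2 L2_scale by blast
  fix \<epsilon> :: real assume "\<epsilon> > 0"
  moreover have "0 < cmod c + 1" by (smt (verit) norm_ge_zero)
  ultimately have "\<epsilon> / (cmod c + 1) > 0" by simp
  then obtain z where z: "L2norm \<mu> (\<lambda>t. g t - ip z t) < \<epsilon> / (cmod c + 1)"
    using assms unfolding Cl_iff by blast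
  have "L2norm \<mu> (\<lambda>t. c * g t - ip (sc c z) t) = L2norm \<mu> (\<lambda>t. c * (g t - ip z t))"
    by (simp add: ip_sc1 algebra_simps)
  also have "\<dots> = cmod c * L2norm \<mu> (\<lambda>t. g t - ip z t)" by (rule L2norm_scale)
  also have "\<dots> \<le> cmod c * (\<epsilon> / (cmod c + 1))" using z by (intro mult_left_mono) auto
  also have "\<dots> < \<epsilon>" using \<open>\<epsilon> > 0\<close> \<open>0 < cmod c + 1\<close> by (simp add: field_simps)
  finally show "\<exists>\<zeta>. L2norm \<mu> (\<lambda>t. c * g t - ip \<zeta> t) < \<epsilon>" by blast
qed

lemma Cl_diff: assumes "g1 \<in> Cl" "g2 \<in> Cl" shows "(\<lambda>t. g1 t - g2 t) \<in> Cl"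
  using Cl_add[OF assms(1) Cl_scale[OF assms(2), of "-1"]] by simp

lemma Cl_const: "(\<lambda>t. c) \<in> Cl"
  by (rule Cl_cong[OF Cl_ip[of "sc c e"]]) (simp add: ip_sc1 X_e spc)

lemma Cl_cnj: assumes "g \<in> Cl" shows "(\<lambda>t. cnj (g t)) \<in> Cl"
  unfolding Cl_iff
proof (intro conjI allI impI)
  show "(\<lambda>t. cnj (g t)) \<in> L2 \<mu>" using assms Cl_L2 L2_cnj by blast
  fix \<epsilon> :: real assume "\<epsilon> > 0"
  then obtain z where z: "L2norm \<mu> (\<lambda>t. g t - ip z t) < \<epsilon>" using assms unfolding Cl_iff by blast
  have "L2norm \<mu> (\<lambda>t. cnj (g t) - ip (star z) t) = L2norm \<mu> (\<lambda>t. cnj (g t - ip z t))"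
    by (rule L2norm_cong_sp) (simp add: spc X_star_ip)
  also have "\<dots> = L2norm \<mu> (\<lambda>t. g t - ip z t)" by (rule L2norm_cnj)
  finally show "\<exists>\<zeta>. L2norm \<mu> (\<lambda>t. cnj (g t) - ip \<zeta> t) < \<epsilon>" using z by metis
qed

lemma orth_Cl:
  assumes h: "h \<in> L2 \<mu>" and orth: "\<And>\<zeta>. L2inner \<mu> h (\<lambda>t. ip \<zeta> t) = 0" and g: "g \<in> Cl"
  shows "L2inner \<mu> h g = 0"
proof -
  have "cmod (L2inner \<mu> h g) \<le> L2norm \<mu> h * \<epsilon>" if "\<epsilon> > 0" for \<epsilon>
  proof -
    obtain z where z: "L2norm \<mu> (\<lambda>t. g t - ip z t) < \<epsilon>" using g \<open>\<epsilon> > 0\<close> unfolding Cl_iff by blast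
    have gz: "(\<lambda>t. g t - ip z t) \<in> L2 \<mu>" using g Cl_L2 ipL2 L2_diff by blast
    have "L2inner \<mu> h g = L2inner \<mu> h (\<lambda>t. g t - ip z t)"
      using L2inner_diff2[OF Cl_L2[OF g] ipL2 h] orth[of z] by simp
    then have "cmod (L2inner \<mu> h g) \<le> L2norm \<mu> h * L2norm \<mu> (\<lambda>t. g t - ip z t)"
      using L2_cs[OF h gz] by simp
    also have "\<dots> \<le> L2norm \<mu> h * \<epsilon>" using z L2norm_nonneg by (intro mult_left_mono) auto
    finally show ?thesis .
  qed
  then have "cmod (L2inner \<mu> h g) \<le> 0" by (intro le_eps[OF _ L2norm_nonneg]) auto
  then show ?thesis by simp
qed

end


context uhM begin

lemma HS_part: "hilbert_schmidt_le ip \<mu> (iota ip) (sqrt 2)"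
  unfolding hilbert_schmidt_le_def
proof (intro allI impI)
  fix B assume ob: "orthonormal_basis ip B"
  then have on: "\<forall>b\<in>B. \<forall>c\<in>B. ip b c = (if b = c then 1 else 0)" by (simp add: orthonormal_basis_def)
  define f where "f b = (L2norm \<mu> (iota ip b))\<^sup>2" for b
  have fb: "f b = (\<integral>t. (cmod (ip b t))\<^sup>2 \<partial>\<mu>)" for b unfolding f_def L2norm_sq iota_eq ..
  have fnn: "f b \<ge> 0" for b unfolding f_def by simp
  have finsum: "sum f F \<le> 2" if F: "finite F" "F \<subseteq> B" for F
  proof -
    have "sum f F = (\<Sum>b\<in>F. \<integral>t. (cmod (ip b t))\<^sup>2 \<partial>\<mu>)" by (simp add: fb)
    also have "\<dots> = (\<integral>t. (\<Sum>b\<in>F. (cmod (ip b t))\<^sup>2) \<partial>\<mu>)"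
      by (rule Bochner_Integration.integral_sum[symmetric]) (rule L2_int[OF ipL2])
    also have "\<dots> \<le> (\<integral>t. 2 \<partial>\<mu>)"
    proof (rule integral_mono)
      show "integrable \<mu> (\<lambda>t. \<Sum>b\<in>F. (cmod (ip b t))\<^sup>2)"
        by (rule Bochner_Integration.integrable_sum) (rule L2_int[OF ipL2])
      show "integrable \<mu> (\<lambda>t. 2::real)" using fin by (simp add: finite_measure.integrable_const)
      fix t assume t: "t \<in> space \<mu>"
      have "(\<Sum>b\<in>F. (cmod (ip b t))\<^sup>2) = (\<Sum>b\<in>F. (cmod (ip t b))\<^sup>2)"
        by (intro sum.cong refl) (metis complex_mod_cnj ip_sym)
      also have "\<dots> \<le> (hnorm ip t)\<^sup>2" using on F by (intro bessel) (auto simp: subset_iff)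
      also have "\<dots> \<le> 2" using X_norm t spc by simp
      finally show "(\<Sum>b\<in>F. (cmod (ip b t))\<^sup>2) \<le> 2" .
    qed
    also have "\<dots> = 2" by (rule int_const_r)
    finally show ?thesis .
  qed
  have summ: "f summable_on B"
  proof (rule nonneg_bdd_above_summable_on)
    show "\<And>x. x \<in> B \<Longrightarrow> 0 \<le> f x" using fnn by simp
    show "bdd_above (sum f ` {F. F \<subseteq> B \<and> finite F})"
      using finsum by (intro bdd_aboveI[where M=2]) auto
  qed
  have "infsum f B \<le> 2" using summ finsum by (intro infsum_le_finite_sums) auto
  then show "(\<lambda>b. (L2norm \<mu> (iota ip b))\<^sup>2) summable_on B \<and> (\<Sum>\<^sub>\<infinity>b\<in>B. (L2norm \<mu> (iota ip b))\<^sup>2) \<le> (sqrt 2)\<^sup>2"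
    using summ unfolding f_def by simp
qed

lemma unit_part: "AE t in \<mu>. iota ip e t = 1"
  by (intro AE_I2) (simp add: iota_eq X_e spc)

lemma star_part: "AE t in \<mu>. iota ip (star \<zeta>) t = cnj (iota ip \<zeta> t)"
  by (intro AE_I2) (simp add: iota_eq X_star_ip spc)

lemma int_perp: "ip \<zeta> e = 0 \<Longrightarrow> L2inner \<mu> (iota ip \<zeta>) (\<lambda>t. 1) = 0"
  unfolding L2inner_def iota_eq by (simp add: integ_eq)

lemma perp_part: assumes "\<zeta>0 \<in> herm_perp ip star e" "hnorm ip \<zeta>0 \<le> 1"
  shows "(AE t in \<mu>. Im (iota ip \<zeta>0 t) = 0) \<and> L2inner \<mu> (iota ip \<zeta>0) (\<lambda>t. 1) = 0
          \<and> L2norm \<mu> (iota ip \<zeta>0) \<le> 1"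
proof (intro conjI)
  have h: "ip \<zeta>0 e = 0" "star \<zeta>0 = \<zeta>0" using assms(1) by (auto simp: herm_perp_def)
  show "AE t in \<mu>. Im (iota ip \<zeta>0 t) = 0" using h by (intro AE_I2) (simp add: iota_eq X_herm spc)
  show "L2inner \<mu> (iota ip \<zeta>0) (\<lambda>t. 1) = 0" using h(1) by (rule int_perp)
  show "L2norm \<mu> (iota ip \<zeta>0) \<le> 1" using perp_norm[OF h(1)] assms(2) by simp
qed

lemma adj_unit_part: "is_iota_adj ip \<mu> (\<lambda>t. 1) e"
  unfolding is_iota_adj_def L2inner_def iota_eq
proof
  fix \<xi>
  have "(\<integral>t. 1 * cnj (ip \<xi> t) \<partial>\<mu>) = cnj (ip \<xi> e)" using integ_eq[of \<xi>] by simp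
  then show "ip e \<xi> = (\<integral>t. 1 * cnj (ip \<xi> t) \<partial>\<mu>)" using ip_sym[of e \<xi>] by simp
qed

lemma decomp:
  assumes "star \<zeta> = \<zeta>"
  defines "c \<equiv> ip \<zeta> e"
  shows "Im c = 0" "ip (\<zeta> - sc c e) e = 0" "star (\<zeta> - sc c e) = \<zeta> - sc c e"
    "(hnorm ip \<zeta>)\<^sup>2 = (Re c)\<^sup>2 + (hnorm ip (\<zeta> - sc c e))\<^sup>2"
proof -
  have "ip \<zeta> e = cnj (ip \<zeta> e)" using ip_star[of \<zeta> e] assms(1) star_e by simp
  then show ci: "Im c = 0" unfolding c_def by (metis cnj.simps(2) neg_equal_zero)
  then have cc: "cnj c = c" by (simp add: complex_eq_iff)
  show z0e: "ip (\<zeta> - sc c e) e = 0" by (simp add: ip_diff1 ip_sc1 ip_ee c_def)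
  show "star (\<zeta> - sc c e) = \<zeta> - sc c e" by (simp add: star_diff star_sc cc star_e assms(1))
  have "ip (sc c e) (\<zeta> - sc c e) = 0"
    using z0e by (simp add: ip_sc1) (metis complex_cnj_zero ip_sym)
  then have "(hnorm ip (sc c e + (\<zeta> - sc c e)))\<^sup>2 = (hnorm ip (sc c e))\<^sup>2 + (hnorm ip (\<zeta> - sc c e))\<^sup>2"
    unfolding hnorm_add_sq by simp
  moreover have "(hnorm ip (sc c e))\<^sup>2 = (Re c)\<^sup>2" using ci
    by (simp add: hnorm_sc norm_e cmod_eq_Re)
  ultimately show "(hnorm ip \<zeta>)\<^sup>2 = (Re c)\<^sup>2 + (hnorm ip (\<zeta> - sc c e))\<^sup>2" by simp
qed

lemma cone_part: assumes "\<zeta> \<in> cone_e ip star e" shows "iota ip \<zeta> \<in> L2pos \<mu>"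
proof -
  have hz: "star \<zeta> = \<zeta>" and nz: "hnorm ip \<zeta> \<le> sqrt 2 * Re (ip \<zeta> e)" using assms by (auto simp: cone_e_def)
  define c where "c = ip \<zeta> e"
  define z0 where "z0 = \<zeta> - sc c e"
  note D = decomp[OF hz, folded c_def z0_def]
  have "0 \<le> sqrt 2 * Re c" using nz hnorm_nonneg[of \<zeta>] unfolding c_def by linarith
  then have cpos: "0 \<le> Re c" by (simp add: zero_le_mult_iff)
  have "(hnorm ip \<zeta>)\<^sup>2 \<le> 2 * (Re c)\<^sup>2"
  proof -
    have "(hnorm ip \<zeta>)\<^sup>2 \<le> (sqrt 2 * Re c)\<^sup>2" using nz hnorm_nonneg unfolding c_def by (intro power_mono) auto
    then show ?thesis by (simp add: power_mult_distrib)
  qed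
  then have "(hnorm ip z0)\<^sup>2 \<le> (Re c)\<^sup>2" using D(4) by (simp add: z0_def)
  then have z0n: "hnorm ip z0 \<le> Re c" using cpos by (rule power2_le_imp_le)
  have ceq: "c = complex_of_real (Re c)" using D(1) by (simp add: complex_eq_iff)
  have pt: "ip \<zeta> t = ip z0 t + c" if "t \<in> space \<mu>" for t
  proof -
    have "\<zeta> = z0 + sc c e" unfolding z0_def by simp
    then have "ip \<zeta> t = ip z0 t + c * ip e t" by (metis ip_add1 ip_sc1)
    then show ?thesis using that X_e spc by simp
  qed
  have intz: "(\<integral>s. iota ip \<zeta> s \<partial>\<mu>) = c" unfolding iota_eq c_def by (rule integ_eq)
  show ?thesis unfolding L2pos_def
  proof (intro CollectI conjI)
    show "iota ip \<zeta> \<in> L2 \<mu>" by (rule iota_L2)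
    show "AE t in \<mu>. Im (iota ip \<zeta> t) = 0" using hz by (intro AE_I2) (simp add: iota_eq X_herm spc)
    have "L2norm \<mu> (\<lambda>t. iota ip \<zeta> t - (\<integral>s. iota ip \<zeta> s \<partial>\<mu>)) = L2norm \<mu> (iota ip z0)"
      unfolding intz by (rule L2norm_cong_sp) (simp add: iota_eq pt)
    also have "\<dots> \<le> hnorm ip z0" using D(2) unfolding z0_def by (intro perp_norm)
    also have "\<dots> \<le> Re (\<integral>s. iota ip \<zeta> s \<partial>\<mu>)" unfolding intz using z0n .
    finally show "L2norm \<mu> (\<lambda>t. iota ip \<zeta> t - (\<integral>s. iota ip \<zeta> s \<partial>\<mu>)) \<le> Re (\<integral>s. iota ip \<zeta> s \<partial>\<mu>)" .
  qed
qed

end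


lemma first_var:
  assumes h: "\<And>s::complex. 0 \<le> - 2 * Re (cnj s * a) + (cmod s)\<^sup>2 * B" and B: "0 \<le> B"
  shows "a = 0"
proof -
  define r where "r = 1 / (B + 1)"
  have r: "0 < r" "r * B < 1" using B unfolding r_def by (auto simp: field_simps)
  define s where "s = complex_of_real r * a"
  have "cnj s * a = complex_of_real (r * (cmod a)\<^sup>2)"
    unfolding s_def by (simp add: mult.assoc cnj_sq)
  moreover have "(cmod s)\<^sup>2 = r\<^sup>2 * (cmod a)\<^sup>2" unfolding s_def using r
    by (simp add: norm_mult power_mult_distrib)
  ultimately have "0 \<le> - 2 * (r * (cmod a)\<^sup>2) + r\<^sup>2 * (cmod a)\<^sup>2 * B" using h[of s] by simp
  then have "0 \<le> r * (cmod a)\<^sup>2 * (r * B - 2)" by (simp add: algebra_simps power2_eq_square)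
  moreover have "r * B - 2 < 0" using r by simp
  ultimately have "r * (cmod a)\<^sup>2 \<le> 0" using zero_le_mult_iff[of "r * (cmod a)\<^sup>2" "r * B - 2"] by linarith
  then have "(cmod a)\<^sup>2 \<le> 0" using r mult_le_0_iff[of r "(cmod a)\<^sup>2"] by linarith
  then show ?thesis by simp
qed

lemma L2_paral:
  assumes "a \<in> L2 M" "b \<in> L2 M"
  shows "(L2norm M (\<lambda>t. a t - b t))\<^sup>2 + (L2norm M (\<lambda>t. a t + b t))\<^sup>2 = 2 * (L2norm M a)\<^sup>2 + 2 * (L2norm M b)\<^sup>2"
proof -
  have e1: "(\<lambda>t. a t - 1 * b t) = (\<lambda>t. a t - b t)" by simp
  have e2: "(\<lambda>t. a t - (-1) * b t) = (\<lambda>t. a t + b t)" by simp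
  show ?thesis using L2_expand[OF assms, of 1] L2_expand[OF assms, of "-1"] unfolding e1 e2 by simp
qed

context uhM begin

lemma L2inner_one: "a \<in> L2 \<mu> \<Longrightarrow> L2inner \<mu> a (\<lambda>t. 1) = (\<integral>t. a t \<partial>\<mu>)"
  unfolding L2inner_def by simp

lemma L2_integrable: "a \<in> L2 \<mu> \<Longrightarrow> integrable \<mu> a"
  using L2_prod_int[OF _ constL2, of a 1] by simp

lemma proj_exists: assumes f: "f \<in> L2 \<mu>" shows "\<exists>g. is_P_image ip \<mu> f g"
proof -
  define D where "D z = (L2norm \<mu> (\<lambda>t. f t - ip z t))\<^sup>2" for z
  define d where "d = Inf (range D)"
  have bb: "bdd_below (range D)" unfolding D_def by (intro bdd_belowI[where m=0]) auto
  have dle: "d \<le> D z" for z unfolding d_def using bb by (intro cInf_lower) auto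
  have d0: "0 \<le> d" unfolding d_def D_def by (intro cInf_greatest) auto
  have "\<forall>n. \<exists>z. D z < d + (1/4)^n"
  proof
    fix n :: nat
    have "Inf (range D) < d + (1/4)^n" unfolding d_def by simp
    then show "\<exists>z. D z < d + (1/4)^n" using cInf_less_iff[OF _ bb] by auto
  qed
  then obtain z where z: "\<And>n. D (z n) < d + (1/4)^n" by metis
  define h where "h n t = ip (z n) t" for n t
  have hL2: "\<And>n. h n \<in> L2 \<mu>" unfolding h_def[abs_def] by (rule ipL2)
  have fh: "\<And>n. (\<lambda>t. f t - h n t) \<in> L2 \<mu>" using f hL2 by (intro L2_diff)
  have cauchy: "(L2norm \<mu> (\<lambda>t. h m t - h n t))\<^sup>2 \<le> 2 * (1/4)^n + 2 * (1/4)^m" for n m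
  proof -
    define w where "w = sc (1/2) (z n + z m)"
    have "(L2norm \<mu> (\<lambda>t. (f t - h n t) - (f t - h m t)))\<^sup>2 + (L2norm \<mu> (\<lambda>t. (f t - h n t) + (f t - h m t)))\<^sup>2
       = 2 * D (z n) + 2 * D (z m)"
      using L2_paral[OF fh fh] unfolding D_def h_def by simp
    moreover have "(\<lambda>t. (f t - h n t) - (f t - h m t)) = (\<lambda>t. h m t - h n t)" by auto
    moreover have "L2norm \<mu> (\<lambda>t. (f t - h n t) + (f t - h m t)) = L2norm \<mu> (\<lambda>t. 2 * (f t - ip w t))"
      unfolding w_def h_def by (simp add: ip_sc1 ip_add1 algebra_simps)
    moreover have "L2norm \<mu> (\<lambda>t. 2 * (f t - ip w t)) = 2 * sqrt (D w)"
      unfolding D_def L2norm_scale by (simp add: L2norm_nonneg)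
    ultimately have "(L2norm \<mu> (\<lambda>t. h m t - h n t))\<^sup>2 = 2 * D (z n) + 2 * D (z m) - 4 * D w"
      using dle[of w] d0 by (simp add: power_mult_distrib)
    then show ?thesis using z[of n] z[of m] dle[of w] by simp
  qed
  have small: "L2norm \<mu> (\<lambda>t. h (Suc n) t - h n t) \<le> 2 * (1/2)^n" for n
  proof -
    have "(L2norm \<mu> (\<lambda>t. h (Suc n) t - h n t))\<^sup>2 \<le> 2 * (1/4)^n + 2 * (1/4)^(Suc n)" by (rule cauchy)
    also have "\<dots> \<le> 4 * (1/4::real)^n" by simp
    also have "4 * (1/4::real)^n = (2 * (1/2)^n)\<^sup>2"
      by (simp add: power2_eq_square power_mult_distrib[symmetric])
    finally show ?thesis by (rule power2_le_imp_le) simp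
  qed
  obtain g where gL2: "g \<in> L2 \<mu>" and glim: "(\<lambda>n. L2norm \<mu> (\<lambda>t. g t - h n t)) \<longlonglongrightarrow> 0"
    using RF[OF hL2 small] by blast
  have gCl: "g \<in> Cl"
    unfolding Cl_iff
  proof (intro conjI allI impI gL2)
    fix \<epsilon> :: real assume "\<epsilon> > 0"
    then obtain N where N: "\<forall>n\<ge>N. norm (L2norm \<mu> (\<lambda>t. g t - h n t) - 0) < \<epsilon>"
      using LIMSEQ_D[OF glim] by blast
    then have "L2norm \<mu> (\<lambda>t. g t - h N t) < \<epsilon>" using L2norm_nonneg by auto
    then show "\<exists>\<zeta>. L2norm \<mu> (\<lambda>t. g t - ip \<zeta> t) < \<epsilon>" unfolding h_def by blast
  qed
  have lowb: "sqrt d \<le> L2norm \<mu> (\<lambda>t. f t - k t)" if k: "k \<in> Cl" for k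
  proof (rule field_le_epsilon)
    fix \<epsilon> :: real assume "\<epsilon> > 0"
    then obtain \<zeta> where \<zeta>: "L2norm \<mu> (\<lambda>t. k t - ip \<zeta> t) < \<epsilon>" using k unfolding Cl_iff by blast
    have "sqrt d \<le> sqrt (D \<zeta>)" using dle by simp
    also have "sqrt (D \<zeta>) = L2norm \<mu> (\<lambda>t. f t - ip \<zeta> t)" unfolding D_def by (simp add: L2norm_nonneg)
    also have "\<dots> = L2norm \<mu> (\<lambda>t. (f t - k t) + (k t - ip \<zeta> t))" by simp
    also have "\<dots> \<le> L2norm \<mu> (\<lambda>t. f t - k t) + L2norm \<mu> (\<lambda>t. k t - ip \<zeta> t)"
      using f k Cl_L2 ipL2 by (intro L2_triangle L2_diff) auto
    finally show "sqrt d \<le> L2norm \<mu> (\<lambda>t. f t - k t) + \<epsilon>" using \<zeta> by simp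
  qed
  have upb: "L2norm \<mu> (\<lambda>t. f t - g t) \<le> sqrt d"
  proof (rule LIMSEQ_le_const)
    have "(\<lambda>n. sqrt (d + (1/4)^n) + L2norm \<mu> (\<lambda>t. g t - h n t)) \<longlonglongrightarrow> sqrt (d + 0) + 0"
      by (intro tendsto_intros glim LIMSEQ_power_zero) simp
    then show "(\<lambda>n. sqrt (d + (1/4)^n) + L2norm \<mu> (\<lambda>t. g t - h n t)) \<longlonglongrightarrow> sqrt d" by simp
    show "\<exists>N. \<forall>n\<ge>N. L2norm \<mu> (\<lambda>t. f t - g t) \<le> sqrt (d + (1/4)^n) + L2norm \<mu> (\<lambda>t. g t - h n t)"
    proof (intro exI allI impI)
      fix n
      have "L2norm \<mu> (\<lambda>t. f t - g t) = L2norm \<mu> (\<lambda>t. (f t - h n t) + (-1) * (g t - h n t))" by simp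
      also have "\<dots> \<le> L2norm \<mu> (\<lambda>t. f t - h n t) + L2norm \<mu> (\<lambda>t. (-1) * (g t - h n t))"
        using f fh gL2 hL2 by (intro L2_triangle L2_scale L2_diff) auto
      also have "L2norm \<mu> (\<lambda>t. (-1) * (g t - h n t)) = L2norm \<mu> (\<lambda>t. g t - h n t)"
        by (simp only: L2norm_scale) simp
      also have "L2norm \<mu> (\<lambda>t. f t - h n t) \<le> sqrt (d + (1/4)^n)"
        using z[of n] unfolding D_def h_def by (metis L2norm_nonneg less_imp_le real_sqrt_le_mono real_sqrt_abs abs_of_nonneg power2_eq_square real_sqrt_mult_self)
      finally show "L2norm \<mu> (\<lambda>t. f t - g t) \<le> sqrt (d + (1/4)^n) + L2norm \<mu> (\<lambda>t. g t - h n t)" by simp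
    qed
  qed
  have fg: "(\<lambda>t. f t - g t) \<in> L2 \<mu>" using f gL2 by (rule L2_diff)
  have orth: "L2inner \<mu> (\<lambda>t. f t - g t) (iota ip \<xi>) = 0" for \<xi>
  proof (rule first_var)
    show "0 \<le> (L2norm \<mu> (iota ip \<xi>))\<^sup>2" by simp
    fix s :: complex
    have kCl: "(\<lambda>t. g t + s * ip \<xi> t) \<in> Cl" by (intro Cl_add gCl Cl_scale Cl_ip)
    have "(L2norm \<mu> (\<lambda>t. f t - g t))\<^sup>2 \<le> (sqrt d)\<^sup>2" using upb L2norm_nonneg by (intro power_mono) auto
    also have "\<dots> \<le> (L2norm \<mu> (\<lambda>t. f t - (g t + s * ip \<xi> t)))\<^sup>2"
      using lowb[OF kCl] d0 by (intro power_mono) auto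
    also have "(\<lambda>t. f t - (g t + s * ip \<xi> t)) = (\<lambda>t. (f t - g t) - s * iota ip \<xi> t)" by (simp add: iota_eq algebra_simps)
    also have "(L2norm \<mu> \<dots>)\<^sup>2 = (L2norm \<mu> (\<lambda>t. f t - g t))\<^sup>2 - 2 * Re (cnj s * L2inner \<mu> (\<lambda>t. f t - g t) (iota ip \<xi>)) + (cmod s)\<^sup>2 * (L2norm \<mu> (iota ip \<xi>))\<^sup>2"
      by (rule L2_expand[OF fg iota_L2])
    finally show "0 \<le> - 2 * Re (cnj s * L2inner \<mu> (\<lambda>t. f t - g t) (iota ip \<xi>)) + (cmod s)\<^sup>2 * (L2norm \<mu> (iota ip \<xi>))\<^sup>2"
      by simp
  qed
  have "is_P_image ip \<mu> f g"
    unfolding is_P_image_def using gCl orth unfolding Cl_def by blast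
  then show ?thesis by blast
qed

end


context uhM begin

lemma L2norm_zero_of_inner: assumes "h \<in> L2 \<mu>" "L2inner \<mu> h h = 0" shows "AE t in \<mu>. h t = 0"
proof -
  have "L2norm \<mu> h = 0" using assms(2) L2inner_self[of \<mu> h] by simp
  then show ?thesis using L2norm_zero_AE[OF assms(1)] by simp
qed

lemma P_one: assumes P: "is_P_image ip \<mu> (\<lambda>t. 1) g" shows "AE t in \<mu>. g t = 1"
proof -
  have gCl: "g \<in> Cl" and orth: "\<And>\<zeta>. L2inner \<mu> (\<lambda>t. 1 - g t) (\<lambda>t. ip \<zeta> t) = 0"
    using P unfolding is_P_image_def Cl_def iota_eq by auto
  have hCl: "(\<lambda>t. 1 - g t) \<in> Cl" by (intro Cl_diff Cl_const gCl)
  have "L2inner \<mu> (\<lambda>t. 1 - g t) (\<lambda>t. 1 - g t) = 0"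
    by (rule orth_Cl[OF Cl_L2[OF hCl] orth hCl])
  then have "AE t in \<mu>. 1 - g t = 0" by (rule L2norm_zero_of_inner[OF Cl_L2[OF hCl]])
  then show ?thesis by auto
qed

lemma P_pos: assumes fp: "f \<in> L2pos \<mu>" and P: "is_P_image ip \<mu> f g" shows "g \<in> L2pos \<mu>"
proof -
  have fL2: "f \<in> L2 \<mu>" and freal: "AE t in \<mu>. Im (f t) = 0"
    and fn: "L2norm \<mu> (\<lambda>t. f t - (\<integral>s. f s \<partial>\<mu>)) \<le> Re (\<integral>s. f s \<partial>\<mu>)"
    using fp unfolding L2pos_def by auto
  have gCl: "g \<in> Cl" and orth: "\<And>\<zeta>. L2inner \<mu> (\<lambda>t. f t - g t) (\<lambda>t. ip \<zeta> t) = 0"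
    using P unfolding is_P_image_def Cl_def iota_eq by auto
  have gL2: "g \<in> L2 \<mu>" by (rule Cl_L2[OF gCl])
  have fm[measurable]: "f \<in> borel_measurable \<mu>" and gm[measurable]: "g \<in> borel_measurable \<mu>"
    using fL2 gL2 L2_meas by auto
  have cgL2: "(\<lambda>t. cnj (g t)) \<in> L2 \<mu>" by (rule L2_cnj[OF gL2])
  define k where "k t = g t - cnj (g t)" for t
  have kCl: "k \<in> Cl" unfolding k_def[abs_def] by (intro Cl_diff gCl Cl_cnj)
  have korth: "L2inner \<mu> k (\<lambda>t. ip \<xi> t) = 0" for \<xi>
  proof -
    have k_eq: "k = (\<lambda>t. (f t - cnj (g t)) - (f t - g t))" unfolding k_def by auto
    have "L2inner \<mu> k (\<lambda>t. ip \<xi> t) = L2inner \<mu> (\<lambda>t. f t - cnj (g t)) (\<lambda>t. ip \<xi> t) - L2inner \<mu> (\<lambda>t. f t - g t) (\<lambda>t. ip \<xi> t)"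
      unfolding k_eq using fL2 gL2 cgL2 ipL2 by (intro L2inner_diff1 L2_diff)
    also have "L2inner \<mu> (\<lambda>t. f t - cnj (g t)) (\<lambda>t. ip \<xi> t) = cnj (L2inner \<mu> (\<lambda>t. f t - g t) (\<lambda>t. ip (star \<xi>) t))"
    proof -
      have "cnj (L2inner \<mu> (\<lambda>t. f t - g t) (\<lambda>t. ip (star \<xi>) t)) = (\<integral>t. cnj ((f t - g t) * cnj (ip (star \<xi>) t)) \<partial>\<mu>)"
        unfolding L2inner_def by (rule Bochner_Integration.integral_cnj[symmetric])
      also have "\<dots> = (\<integral>t. (f t - cnj (g t)) * cnj (ip \<xi> t) \<partial>\<mu>)"
      proof (rule integral_cong_AE)
        show "AE t in \<mu>. cnj ((f t - g t) * cnj (ip (star \<xi>) t)) = (f t - cnj (g t)) * cnj (ip \<xi> t)"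
          using freal
        proof (rule AE_mp[OF _ AE_I2], intro impI)
          fix t assume t: "t \<in> space \<mu>" and "Im (f t) = 0"
          then have "cnj (f t) = f t" by (simp add: complex_eq_iff)
          then show "cnj ((f t - g t) * cnj (ip (star \<xi>) t)) = (f t - cnj (g t)) * cnj (ip \<xi> t)"
            using t spc X_star_ip[of t \<xi>] by simp
        qed
      qed measurable
      finally show ?thesis unfolding L2inner_def by simp
    qed
    finally show ?thesis using orth by simp
  qed
  have "L2inner \<mu> k k = 0" by (rule orth_Cl[OF Cl_L2[OF kCl] korth kCl])
  then have "AE t in \<mu>. k t = 0" by (rule L2norm_zero_of_inner[OF Cl_L2[OF kCl]])
  then have greal: "AE t in \<mu>. Im (g t) = 0"
    unfolding k_def by eventually_elim (simp add: complex_eq_iff)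
  define c where "c = (\<integral>s. g s \<partial>\<mu>)"
  have "L2inner \<mu> (\<lambda>t. f t - g t) (\<lambda>t. 1) = L2inner \<mu> (\<lambda>t. f t - g t) (\<lambda>t. ip e t)"
    by (rule L2inner_cong_sp) (auto simp: spc X_e)
  also have "\<dots> = 0" by (rule orth)
  finally have "(\<integral>t. f t - g t \<partial>\<mu>) = 0" using L2inner_one[OF L2_diff[OF fL2 gL2]] by simp
  then have fc: "(\<integral>s. f s \<partial>\<mu>) = c" unfolding c_def using L2_integrable[OF fL2] L2_integrable[OF gL2] by simp
  have a: "(\<lambda>t. f t - g t) \<in> L2 \<mu>" using fL2 gL2 by (rule L2_diff)
  have bCl: "(\<lambda>t. g t - c) \<in> Cl" by (intro Cl_diff gCl Cl_const)
  have ab: "L2inner \<mu> (\<lambda>t. f t - g t) (\<lambda>t. g t - c) = 0" by (rule orth_Cl[OF a orth bCl])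
  have e2: "(\<lambda>t. (f t - g t) - (-1) * (g t - c)) = (\<lambda>t. f t - c)" by auto
  have "(L2norm \<mu> (\<lambda>t. f t - c))\<^sup>2 = (L2norm \<mu> (\<lambda>t. f t - g t))\<^sup>2 + (L2norm \<mu> (\<lambda>t. g t - c))\<^sup>2"
    using L2_expand[OF a Cl_L2[OF bCl], of "-1"] unfolding e2 ab by simp
  then have "(L2norm \<mu> (\<lambda>t. g t - c))\<^sup>2 \<le> (L2norm \<mu> (\<lambda>t. f t - c))\<^sup>2" by simp
  then have "L2norm \<mu> (\<lambda>t. g t - c) \<le> L2norm \<mu> (\<lambda>t. f t - c)"
    using L2norm_nonneg by (rule power2_le_imp_le)
  also have "\<dots> \<le> Re c" using fn unfolding fc .
  finally show ?thesis unfolding L2pos_def c_def using gL2 greal by simp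
qed

end


lemma conv_by_bound:
  fixes a :: "nat \<Rightarrow> 'b::real_normed_vector"
  assumes "\<And>n. norm (a n - l) \<le> b n" "b \<longlonglongrightarrow> 0"
  shows "a \<longlonglongrightarrow> l"
proof -
  have "(\<lambda>n. a n - l) \<longlonglongrightarrow> 0"
    by (rule Lim_null_comparison[OF always_eventually assms(2)]) (use assms(1) in blast)
  then show ?thesis using Lim_null by blast
qed

context uhM begin

lemma iota_norm_bound: "L2norm \<mu> (iota ip x) \<le> sqrt 2 * hnorm ip x"
proof -
  have "(\<integral>t. (cmod (ip x t))\<^sup>2 \<partial>\<mu>) \<le> (\<integral>t. (hnorm ip x * sqrt 2)\<^sup>2 \<partial>\<mu>)"
  proof (rule integral_mono)
    show "integrable \<mu> (\<lambda>t. (cmod (ip x t))\<^sup>2)" using L2_int[OF ipL2] .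
    show "integrable \<mu> (\<lambda>t. (hnorm ip x * sqrt 2)\<^sup>2)" using fin by (simp add: finite_measure.integrable_const)
    fix t assume "t \<in> space \<mu>"
    then show "(cmod (ip x t))\<^sup>2 \<le> (hnorm ip x * sqrt 2)\<^sup>2" using X_bound[of t x] spc
      by (intro power_mono) auto
  qed
  then have "(L2norm \<mu> (iota ip x))\<^sup>2 \<le> (sqrt 2 * hnorm ip x)\<^sup>2"
    unfolding L2norm_sq iota_eq int_const_r by (simp add: mult.commute)
  moreover have "0 \<le> sqrt 2 * hnorm ip x" using hnorm_nonneg[of x] by simp
  ultimately show ?thesis by (rule power2_le_imp_le)
qed

lemma hparal: "(hnorm ip (a - b))\<^sup>2 + (hnorm ip (a + b))\<^sup>2 = 2 * (hnorm ip a)\<^sup>2 + 2 * (hnorm ip b)\<^sup>2"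
  using hnorm_add_sq[of a b] hnorm_diff_sq[of a b] by simp

lemma riesz: assumes gL2: "g \<in> L2 \<mu>" shows "\<exists>\<zeta>. \<forall>\<xi>. ip \<zeta> \<xi> = L2inner \<mu> g (iota ip \<xi>)"
proof -
  define \<psi> where "\<psi> x = cnj (L2inner \<mu> g (iota ip x))" for x
  define K where "K = L2norm \<mu> g * sqrt 2"
  have K0: "0 \<le> K" unfolding K_def by (simp add: L2norm_nonneg)
  have \<psi>add: "\<psi> (x + y) = \<psi> x + \<psi> y" for x y
  proof -
    have "iota ip (x + y) = (\<lambda>t. iota ip x t + iota ip y t)" by (simp add: iota_eq ip_add1)
    then show ?thesis unfolding \<psi>_def using L2inner_add2[OF iota_L2 iota_L2 gL2] by simp
  qed
  have \<psi>sc: "\<psi> (sc a x) = a * \<psi> x" for a x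
  proof -
    have "iota ip (sc a x) = (\<lambda>t. a * iota ip x t)" by (simp add: iota_eq ip_sc1)
    then show ?thesis unfolding \<psi>_def by (simp add: L2inner_scale2)
  qed
  have \<psi>diff: "\<psi> (x - y) = \<psi> x - \<psi> y" for x y
    using \<psi>add[of x "sc (-1) y"] \<psi>sc[of "-1" y] sc_minus[of y] by simp
  have \<psi>bnd: "cmod (\<psi> x) \<le> K * hnorm ip x" for x
  proof -
    have "cmod (\<psi> x) \<le> L2norm \<mu> g * L2norm \<mu> (iota ip x)"
      unfolding \<psi>_def using L2_cs[OF gL2 iota_L2] by simp
    also have "\<dots> \<le> L2norm \<mu> g * (sqrt 2 * hnorm ip x)"
      by (intro mult_left_mono iota_norm_bound L2norm_nonneg)
    finally show ?thesis unfolding K_def by (simp add: mult.assoc)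
  qed
  define F where "F x = (hnorm ip x)\<^sup>2 - 2 * Re (\<psi> x)" for x
  have Flow: "- (K\<^sup>2) \<le> F x" for x
  proof -
    have "Re (\<psi> x) \<le> K * hnorm ip x" using \<psi>bnd[of x] complex_Re_le_cmod order_trans by blast
    moreover have "0 \<le> (hnorm ip x - K)\<^sup>2" by simp
    moreover have "(hnorm ip x - K)\<^sup>2 = (hnorm ip x)\<^sup>2 - 2 * (K * hnorm ip x) + K\<^sup>2"
      by (simp add: power2_diff algebra_simps)
    ultimately show ?thesis unfolding F_def by linarith
  qed
  define m where "m = Inf (range F)"
  have bb: "bdd_below (range F)" using Flow by (intro bdd_belowI[where m="- (K\<^sup>2)"]) auto
  have mle: "m \<le> F x" for x unfolding m_def using bb by (intro cInf_lower) auto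
  have "\<forall>n. \<exists>z. F z < m + 1 / real (Suc n)"
  proof
    fix n :: nat
    have "Inf (range F) < m + 1 / real (Suc n)" unfolding m_def by simp
    then show "\<exists>z. F z < m + 1 / real (Suc n)" using cInf_less_iff[OF _ bb] by auto
  qed
  then obtain z where z: "\<And>n. F (z n) < m + 1 / real (Suc n)" by metis
  have par: "(hnorm ip (a - b))\<^sup>2 = 2 * F a + 2 * F b - 4 * F (sc (1/2) (a + b))" for a b
  proof -
    have "hnorm ip (sc (1/2) (a + b)) = hnorm ip (a + b) / 2" by (simp add: hnorm_sc)
    then have w1: "(hnorm ip (sc (1/2) (a + b)))\<^sup>2 = (hnorm ip (a + b))\<^sup>2 / 4"
      by (metis power_divide numeral_Bit0_eq_double power2_eq_square numeral_times_numeral semiring_norm(12) semiring_norm(13))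
    have "\<psi> (sc (1/2) (a + b)) = (\<psi> a + \<psi> b) / 2" by (simp add: \<psi>sc \<psi>add)
    then have w2: "Re (\<psi> (sc (1/2) (a + b))) = (Re (\<psi> a) + Re (\<psi> b)) / 2"
      by (metis Re_divide_numeral plus_complex.sel(1))
    have w3: "(hnorm ip (a - b))\<^sup>2 = 2 * (hnorm ip a)\<^sup>2 + 2 * (hnorm ip b)\<^sup>2 - (hnorm ip (a + b))\<^sup>2"
      using hparal[of a b] by linarith
    show ?thesis unfolding F_def w3 w1 w2 by (simp add: algebra_simps)
  qed
  have cau: "(hnorm ip (z n - z k))\<^sup>2 \<le> 2 / real (Suc n) + 2 / real (Suc k)" for n k
    using par[of "z n" "z k"] z[of n] z[of k] mle[of "sc (1/2) (z n + z k)"] by simp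
  have "\<exists>l. (\<lambda>n. hnorm ip (z n - l)) \<longlonglongrightarrow> 0"
  proof (rule complete, intro allI impI)
    fix \<epsilon> :: real assume "\<epsilon> > 0"
    obtain N where N: "4 / \<epsilon>\<^sup>2 < real N" using reals_Archimedean2 by blast
    show "\<exists>N. \<forall>m\<ge>N. \<forall>n\<ge>N. hnorm ip (z m - z n) < \<epsilon>"
    proof (intro exI allI impI)
      fix a b assume ab: "N \<le> a" "N \<le> b"
      have e2: "\<epsilon>\<^sup>2 > 0" using \<open>\<epsilon> > 0\<close> by simp
      have "4 / \<epsilon>\<^sup>2 < real (Suc a)" "4 / \<epsilon>\<^sup>2 < real (Suc b)" using N ab by auto
      then have "2 / real (Suc a) < \<epsilon>\<^sup>2 / 2" "2 / real (Suc b) < \<epsilon>\<^sup>2 / 2"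
        using e2 by (auto simp: field_simps)
      then have "(hnorm ip (z a - z b))\<^sup>2 < \<epsilon>\<^sup>2" using cau[of a b] by simp
      then show "hnorm ip (z a - z b) < \<epsilon>" using \<open>\<epsilon> > 0\<close> by (simp add: power_less_imp_less_base)
    qed
  qed
  then obtain \<zeta> where conv: "(\<lambda>n. hnorm ip (z n - \<zeta>)) \<longlonglongrightarrow> 0" by blast
  have hconv: "(\<lambda>n. hnorm ip (z n)) \<longlonglongrightarrow> hnorm ip \<zeta>"
    by (rule conv_by_bound[OF _ conv]) (simp add: hnorm_rev)
  have pconv: "(\<lambda>n. \<psi> (z n)) \<longlonglongrightarrow> \<psi> \<zeta>"
  proof (rule conv_by_bound)
    show "(\<lambda>n. K * hnorm ip (z n - \<zeta>)) \<longlonglongrightarrow> 0" using tendsto_mult_right_zero[OF conv] by simp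
    show "norm (\<psi> (z n) - \<psi> \<zeta>) \<le> K * hnorm ip (z n - \<zeta>)" for n using \<psi>bnd[of "z n - \<zeta>"] \<psi>diff by simp
  qed
  have Fconv: "(\<lambda>n. F (z n)) \<longlonglongrightarrow> F \<zeta>" unfolding F_def by (intro tendsto_intros hconv pconv)
  have Fm: "(\<lambda>n. F (z n)) \<longlonglongrightarrow> m"
  proof (rule conv_by_bound)
    show "(\<lambda>n. 1 / real (Suc n)) \<longlonglongrightarrow> 0" by (rule LIMSEQ_Suc[OF lim_const_over_n])
    show "norm (F (z n) - m) \<le> 1 / real (Suc n)" for n using z[of n] mle[of "z n"] by simp
  qed
  have Fz: "F \<zeta> = m" using LIMSEQ_unique[OF Fconv Fm] .
  have main: "ip \<xi> \<zeta> = \<psi> \<xi>" for \<xi>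
  proof (rule eq_iff_diff_eq_0[THEN iffD2], rule first_var)
    show "0 \<le> (hnorm ip \<xi>)\<^sup>2" by simp
    fix s :: complex
    define u where "u = - cnj s"
    have "F \<zeta> \<le> F (\<zeta> + sc u \<xi>)" using Fz mle by simp
    moreover have "F (\<zeta> + sc u \<xi>) = F \<zeta> + (cmod s)\<^sup>2 * (hnorm ip \<xi>)\<^sup>2 - 2 * Re (cnj s * (ip \<xi> \<zeta> - \<psi> \<xi>))"
    proof -
      have r1: "(hnorm ip (\<zeta> + sc u \<xi>))\<^sup>2 = (hnorm ip \<zeta>)\<^sup>2 + (cmod s)\<^sup>2 * (hnorm ip \<xi>)\<^sup>2 + 2 * Re (ip \<zeta> (sc u \<xi>))"
        unfolding hnorm_add_sq hnorm_sc u_def by (simp add: power_mult_distrib)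
      have "ip \<zeta> (sc u \<xi>) = - (s * cnj (ip \<xi> \<zeta>))" unfolding u_def ip_sc2 using ip_sym[of \<zeta> \<xi>] by simp
      then have r2: "Re (ip \<zeta> (sc u \<xi>)) = - Re (cnj s * ip \<xi> \<zeta>)" by simp
      have "\<psi> (\<zeta> + sc u \<xi>) = \<psi> \<zeta> - cnj s * \<psi> \<xi>" unfolding u_def \<psi>add \<psi>sc by simp
      then have r3: "Re (\<psi> (\<zeta> + sc u \<xi>)) = Re (\<psi> \<zeta>) - Re (cnj s * \<psi> \<xi>)" by simp
      have r4: "Re (cnj s * (ip \<xi> \<zeta> - \<psi> \<xi>)) = Re (cnj s * ip \<xi> \<zeta>) - Re (cnj s * \<psi> \<xi>)"
        by (simp add: right_diff_distrib)
      show ?thesis unfolding F_def r4 using r1 r2 r3 by (smt (verit))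
    qed
    ultimately show "0 \<le> - 2 * Re (cnj s * (ip \<xi> \<zeta> - \<psi> \<xi>)) + (cmod s)\<^sup>2 * (hnorm ip \<xi>)\<^sup>2" by simp
  qed
  have "ip \<zeta> \<xi> = L2inner \<mu> g (iota ip \<xi>)" for \<xi>
    using ip_sym[of \<zeta> \<xi>] main[of \<xi>] unfolding \<psi>_def by simp
  then show ?thesis by blast
qed

end


context uhM begin

lemma adj_part: assumes gp: "g \<in> L2pos \<mu>" shows "\<exists>\<zeta> \<in> cone_e ip star e. is_iota_adj ip \<mu> g \<zeta>"
proof -
  have gL2: "g \<in> L2 \<mu>" and greal: "AE t in \<mu>. Im (g t) = 0"
    and gn: "L2norm \<mu> (\<lambda>t. g t - (\<integral>s. g s \<partial>\<mu>)) \<le> Re (\<integral>s. g s \<partial>\<mu>)"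
    using gp unfolding L2pos_def by auto
  have gm[measurable]: "g \<in> borel_measurable \<mu>" using gL2 L2_meas by auto
  obtain \<zeta> where adj: "\<And>\<xi>. ip \<zeta> \<xi> = L2inner \<mu> g (iota ip \<xi>)" using riesz[OF gL2] by blast
  have sym: "ip (star \<zeta>) \<xi> = ip \<zeta> \<xi>" for \<xi>
  proof -
    have "ip (star \<zeta>) \<xi> = cnj (ip \<zeta> (star \<xi>))" using ip_star[of \<zeta> "star \<xi>"] star_star by simp
    also have "\<dots> = (\<integral>t. cnj (g t * cnj (ip (star \<xi>) t)) \<partial>\<mu>)"
      unfolding adj L2inner_def iota_eq by (rule Bochner_Integration.integral_cnj[symmetric])
    also have "\<dots> = (\<integral>t. g t * cnj (ip \<xi> t) \<partial>\<mu>)"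
    proof (rule integral_cong_AE)
      show "AE t in \<mu>. cnj (g t * cnj (ip (star \<xi>) t)) = g t * cnj (ip \<xi> t)"
        using greal
      proof (rule AE_mp[OF _ AE_I2], intro impI)
        fix t assume t: "t \<in> space \<mu>" and "Im (g t) = 0"
        then have "cnj (g t) = g t" by (simp add: complex_eq_iff)
        then show "cnj (g t * cnj (ip (star \<xi>) t)) = g t * cnj (ip \<xi> t)"
          using t spc X_star_ip[of t \<xi>] by simp
      qed
    qed measurable
    also have "\<dots> = ip \<zeta> \<xi>" unfolding adj L2inner_def iota_eq ..
    finally show ?thesis .
  qed
  have hz: "star \<zeta> = \<zeta>"
  proof -
    have "ip (star \<zeta> - \<zeta>) (star \<zeta> - \<zeta>) = 0" by (simp add: ip_diff1 sym)
    then have "star \<zeta> - \<zeta> = 0" by (rule ip_def0)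
    then show ?thesis by simp
  qed
  define c where "c = ip \<zeta> e"
  define z0 where "z0 = \<zeta> - sc c e"
  note D = decomp[OF hz, folded c_def]
  have cint: "c = (\<integral>s. g s \<partial>\<mu>)"
  proof -
    have "c = L2inner \<mu> g (\<lambda>t. ip e t)" unfolding c_def adj iota_eq ..
    also have "\<dots> = L2inner \<mu> g (\<lambda>t. 1)" by (rule L2inner_cong_sp) (auto simp: spc X_e)
    also have "\<dots> = (\<integral>s. g s \<partial>\<mu>)" by (rule L2inner_one[OF gL2])
    finally show ?thesis .
  qed
  define m where "m = Re c"
  have m0: "0 \<le> m" using gn L2norm_nonneg[of \<mu>] unfolding m_def cint by (metis order_trans)
  have gc: "(\<lambda>t. g t - c) \<in> L2 \<mu>" using gL2 constL2 by (rule L2_diff)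
  have z0z0: "ip z0 z0 = L2inner \<mu> (\<lambda>t. g t - c) (iota ip z0)"
  proof -
    have z0e: "ip z0 e = 0" using D(2) unfolding z0_def .
    have "ip e z0 = 0" using ip_sym[of z0 e] z0e by simp
    moreover have "ip (\<zeta> - sc c e) z0 = ip \<zeta> z0 - c * ip e z0" by (simp add: ip_diff1 ip_sc1)
    ultimately have "ip z0 z0 = ip \<zeta> z0" unfolding z0_def[symmetric] by simp
    also have "\<dots> = L2inner \<mu> g (iota ip z0)" by (rule adj)
    also have "L2inner \<mu> (\<lambda>t. c) (iota ip z0) = 0"
      unfolding L2inner_def iota_eq using integ_eq[of z0] z0e by simp
    then have "L2inner \<mu> g (iota ip z0) = L2inner \<mu> (\<lambda>t. g t - c) (iota ip z0)"
      using L2inner_diff1[OF gL2 constL2 iota_L2, of c z0] by simp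
    finally show ?thesis .
  qed
  have "(hnorm ip z0)\<^sup>2 \<le> m * hnorm ip z0"
  proof -
    have "(hnorm ip z0)\<^sup>2 = Re (ip z0 z0)" by (rule hnorm_sq)
    also have "\<dots> \<le> cmod (ip z0 z0)" by (rule complex_Re_le_cmod)
    also have "\<dots> \<le> L2norm \<mu> (\<lambda>t. g t - c) * L2norm \<mu> (iota ip z0)"
      unfolding z0z0 by (rule L2_cs[OF gc iota_L2])
    also have "\<dots> \<le> m * hnorm ip z0"
    proof (rule mult_mono)
      show "L2norm \<mu> (\<lambda>t. g t - c) \<le> m" using gn unfolding m_def cint .
      show "L2norm \<mu> (iota ip z0) \<le> hnorm ip z0" using D(2) unfolding z0_def by (rule perp_norm)
    qed (auto simp: m0 L2norm_nonneg)
    finally show ?thesis .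
  qed
  then have z0m: "hnorm ip z0 \<le> m"
  proof (cases "hnorm ip z0 = 0")
    case True then show ?thesis using m0 by simp
  next
    case False
    then have "hnorm ip z0 > 0" using hnorm_nonneg[of z0] by simp
    moreover assume "(hnorm ip z0)\<^sup>2 \<le> m * hnorm ip z0"
    ultimately show ?thesis by (simp add: power2_eq_square)
  qed
  have "(hnorm ip \<zeta>)\<^sup>2 \<le> (sqrt 2 * m)\<^sup>2"
  proof -
    have "(hnorm ip \<zeta>)\<^sup>2 = m\<^sup>2 + (hnorm ip z0)\<^sup>2" using D(4) unfolding m_def z0_def .
    also have "(hnorm ip z0)\<^sup>2 \<le> m\<^sup>2" using z0m hnorm_nonneg by (intro power_mono)
    finally show ?thesis by (simp add: power_mult_distrib)
  qed
  moreover have "0 \<le> sqrt 2 * m" using m0 by simp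
  ultimately have "hnorm ip \<zeta> \<le> sqrt 2 * m" by (rule power2_le_imp_le)
  then have "\<zeta> \<in> cone_e ip star e" unfolding cone_e_def m_def c_def using hz by simp
  moreover have "is_iota_adj ip \<mu> g \<zeta>" unfolding is_iota_adj_def using adj by blast
  ultimately show ?thesis by blast
qed

end


theorem mainTheorem20:
  fixes sc :: "complex \<Rightarrow> 'h::ab_group_add \<Rightarrow> 'h"
    and ip :: "'h \<Rightarrow> 'h \<Rightarrow> complex"
    and star :: "'h \<Rightarrow> 'h"
    and e :: 'h
    and \<mu> :: "'h measure"
  assumes H: "unital_hilbert_space sc ip star e"
    and mu: "unital_measure ip star e \<mu>"
  shows "(\<forall>\<zeta>. iota ip \<zeta> \<in> L2 \<mu>)
    \<and> hilbert_schmidt_le ip \<mu> (iota ip) (sqrt 2)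
    \<and> (AE t in \<mu>. iota ip e t = 1)
    \<and> (\<forall>\<zeta>. AE t in \<mu>. iota ip (star \<zeta>) t = cnj (iota ip \<zeta> t))
    \<and> (\<forall>\<zeta>0 \<in> herm_perp ip star e. hnorm ip \<zeta>0 \<le> 1 \<longrightarrow>
          (AE t in \<mu>. Im (iota ip \<zeta>0 t) = 0)
          \<and> L2inner \<mu> (iota ip \<zeta>0) (\<lambda>t. 1) = 0
          \<and> L2norm \<mu> (iota ip \<zeta>0) \<le> 1)
    \<and> (\<forall>\<zeta> \<in> cone_e ip star e. iota ip \<zeta> \<in> L2pos \<mu>)
    \<and> (\<forall>g. is_P_image ip \<mu> (\<lambda>t. 1) g \<longrightarrow> (AE t in \<mu>. g t = 1))
    \<and> (\<forall>f \<in> L2pos \<mu>. (\<exists>g. is_P_image ip \<mu> f g)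
          \<and> (\<forall>g. is_P_image ip \<mu> f g \<longrightarrow> g \<in> L2pos \<mu>))
    \<and> is_iota_adj ip \<mu> (\<lambda>t. 1) e
    \<and> (\<forall>g \<in> L2pos \<mu>. \<exists>\<zeta> \<in> cone_e ip star e. is_iota_adj ip \<mu> g \<zeta>)"
proof -
  interpret M: uhM sc ip star e "state_space ip star e" \<mu>
    by (simp add: uhM_def uhX_def uh_def uhM_axioms_def H mu)
  show ?thesis
  proof (intro conjI allI ballI impI)
    show "\<And>\<zeta>. iota ip \<zeta> \<in> L2 \<mu>" by (rule M.iota_L2)
    show "hilbert_schmidt_le ip \<mu> (iota ip) (sqrt 2)" by (rule M.HS_part)
    show "AE t in \<mu>. iota ip e t = 1" by (rule M.unit_part)
    show "\<And>\<zeta>. AE t in \<mu>. iota ip (star \<zeta>) t = cnj (iota ip \<zeta> t)" by (rule M.star_part)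
    show "\<And>\<zeta>0. \<zeta>0 \<in> herm_perp ip star e \<Longrightarrow> hnorm ip \<zeta>0 \<le> 1 \<Longrightarrow> AE t in \<mu>. Im (iota ip \<zeta>0 t) = 0"
      using M.perp_part by blast
    show "\<And>\<zeta>0. \<zeta>0 \<in> herm_perp ip star e \<Longrightarrow> hnorm ip \<zeta>0 \<le> 1 \<Longrightarrow> L2inner \<mu> (iota ip \<zeta>0) (\<lambda>t. 1) = 0"
      using M.perp_part by blast
    show "\<And>\<zeta>0. \<zeta>0 \<in> herm_perp ip star e \<Longrightarrow> hnorm ip \<zeta>0 \<le> 1 \<Longrightarrow> L2norm \<mu> (iota ip \<zeta>0) \<le> 1"
      using M.perp_part by blast
    show "\<And>\<zeta>. \<zeta> \<in> cone_e ip star e \<Longrightarrow> iota ip \<zeta> \<in> L2pos \<mu>" by (rule M.cone_part)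
    show "\<And>g. is_P_image ip \<mu> (\<lambda>t. 1) g \<Longrightarrow> AE t in \<mu>. g t = 1" by (rule M.P_one)
    show "\<And>f. f \<in> L2pos \<mu> \<Longrightarrow> \<exists>g. is_P_image ip \<mu> f g"
      using M.proj_exists unfolding L2pos_def by blast
    show "\<And>f g. f \<in> L2pos \<mu> \<Longrightarrow> is_P_image ip \<mu> f g \<Longrightarrow> g \<in> L2pos \<mu>" by (rule M.P_pos)
    show "is_iota_adj ip \<mu> (\<lambda>t. 1) e" by (rule M.adj_unit_part)
    show "\<And>g. g \<in> L2pos \<mu> \<Longrightarrow> \<exists>\<zeta>\<in>cone_e ip star e. is_iota_adj ip \<mu> g \<zeta>" by (rule M.adj_part)
  qed
qed


end
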